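(* Let $\chi$ be a universal constant with the following property: for every SBM on $[n]$ with communities $S_1,\dots,S_k$ and edge probabilities $a/n>b/n$, with $L_{ij}=1$ for $i,j$ in the same community and $L_{ij}=-1$ otherwise, with probability at least $1-2/n^2$ there is $S\subseteq[n]$ with $|S|\ge(1-e^{-2C})n$ and $\|(A-\frac{a+b}{2n}J-\frac{a-b}{2n}L)_{S\times S}\|_{\mathrm{op}}\le\chi\sqrt{a+b}$. Now let $A$ be the adjacency matrix of an $\varepsilon$-corrupted semi-random SBM with edge parameters $b<a$ and communities $S_1,\dots,S_k$ partitioning $[n]$, and let $C=(\sqrt a-\sqrt b)^2$. Then with probability at least $1-2/n^2$, every optimal solution $W$ of the Initialization SDP (with inputs $A,a,b,\chi$) satisfies: (1) $\sum W_{ij}$ over pairs $(i,j)$ with $i,j$ in different communities is at most $(5\chi/\sqrt C+2\varepsilon)n^2$; (2) $\sum W_{ij}$ over pairs $(i,j)$ with $i,j$ in the same community is at least $\sum_{i=1}^k|S_i|^2-(6\chi/\sqrt C+4\varepsilon)n^2$.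
   Context: $\varepsilon$-corrupted semi-random SBM: there is an unknown partition of $[n]$ into communities $S_1,\dots,S_k$. A graph $A_0$ is sampled with all pairs independent, same-community pairs joined with probability $a/n$ and different-community pairs with probability $b/n$ (symmetric adjacency matrix, zero diagonal). An adversary then (i) arbitrarily adds edges within communities and removes edges between communities, and (ii) picks up to $\varepsilon n$ vertices and arbitrarily modifies their incident edges; $A$ is the resulting adjacency matrix. Initialization SDP: given $A,a,b,\chi$, find $n\times n$ real matrices $W,F$ with $0\le W_{ij},F_{ij}\le1$ for all $i,j$, $\|W\|_1\le n$ (trace norm, i.e. sum of singular values), and $-\chi\sqrt{a+b}\,I\preceq(A-(a/n)J-F)\odot W\preceq\chi\sqrt{a+b}\,I$ (where $X\preceq Y$ means $Y-X$ is symmetric positive semidefinite), maximizing $\sum_{i,j}W_{ij}$. $J$ is the all-ones matrix and $\odot$ the entrywise product. *)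

theory Defs
  imports "HOL-Probability.Probability" "Jordan_Normal_Form.Char_Poly"
begin

text \<open>Matrices are functions nat => nat => real; only indices below n matter.\<close>

definition is_partition :: "nat \<Rightarrow> nat \<Rightarrow> (nat \<Rightarrow> nat set) \<Rightarrow> bool" where
  "is_partition n k S \<longleftrightarrow>
     (\<Union>l<k. S l) = {..<n} \<and> (\<forall>l<k. \<forall>m<k. l \<noteq> m \<longrightarrow> S l \<inter> S m = {})"

definition same_comm :: "nat \<Rightarrow> (nat \<Rightarrow> nat set) \<Rightarrow> nat \<Rightarrow> nat \<Rightarrow> bool" where
  "same_comm k S i j \<longleftrightarrow> (\<exists>l<k. i \<in> S l \<and> j \<in> S l)"

text \<open>The SBM: independent edges on pairs i<j<n; the resulting adjacency matrix is
  symmetric with zero diagonal (and zero outside [n]).\<close>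
definition edge_adj :: "(nat \<times> nat \<Rightarrow> bool) \<Rightarrow> nat \<Rightarrow> nat \<Rightarrow> real" where
  "edge_adj e i j = (if e (i, j) \<or> e (j, i) then 1 else 0)"

definition sbm :: "nat \<Rightarrow> nat \<Rightarrow> (nat \<Rightarrow> nat set) \<Rightarrow> real \<Rightarrow> real \<Rightarrow> (nat \<Rightarrow> nat \<Rightarrow> real) pmf" where
  "sbm n k S a b = map_pmf edge_adj
     (Pi_pmf {(i, j). i < j \<and> j < n} False
        (\<lambda>(i, j). bernoulli_pmf (if same_comm k S i j then a / real n else b / real n)))"

definition adjacency :: "nat \<Rightarrow> (nat \<Rightarrow> nat \<Rightarrow> real) \<Rightarrow> bool" where
  "adjacency n A \<longleftrightarrow> (\<forall>i j. A i j \<in> {0, 1} \<and> A i j = A j i \<and> A i i = 0 \<and>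
                              (i \<ge> n \<or> j \<ge> n \<longrightarrow> A i j = 0))"

text \<open>A is obtainable from A0 by the semi-random monotone adversary (step (i), giving A1)
  followed by arbitrary modification of the edges incident to at most eps*n vertices B.\<close>
definition admissible ::
  "nat \<Rightarrow> nat \<Rightarrow> (nat \<Rightarrow> nat set) \<Rightarrow> real \<Rightarrow> (nat \<Rightarrow> nat \<Rightarrow> real) \<Rightarrow> (nat \<Rightarrow> nat \<Rightarrow> real) \<Rightarrow> bool" where
  "admissible n k S eps A0 A \<longleftrightarrow>
     adjacency n A \<and>
     (\<exists>A1 B. adjacency n A1 \<and>
        (\<forall>i<n. \<forall>j<n. (same_comm k S i j \<longrightarrow> A1 i j \<ge> A0 i j) \<and>
                      (\<not> same_comm k S i j \<longrightarrow> A1 i j \<le> A0 i j)) \<and>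
        B \<subseteq> {..<n} \<and> real (card B) \<le> eps * real n \<and>
        (\<forall>i<n. \<forall>j<n. i \<notin> B \<and> j \<notin> B \<longrightarrow> A i j = A1 i j))"

definition to_mat :: "nat \<Rightarrow> (nat \<Rightarrow> nat \<Rightarrow> real) \<Rightarrow> real mat" where
  "to_mat n M = mat n n (\<lambda>(i, j). M i j)"

text \<open>Trace norm = sum of singular values, i.e. of the square roots of the eigenvalues
  (with algebraic multiplicity) of M^T M.\<close>
definition trace_norm :: "nat \<Rightarrow> (nat \<Rightarrow> nat \<Rightarrow> real) \<Rightarrow> real" where
  "trace_norm n M =
     (let p = char_poly (transpose_mat (to_mat n M) * to_mat n M)
      in \<Sum>r\<in>{r. poly p r = 0}. sqrt r * real (order r p))"

definition psd :: "nat \<Rightarrow> (nat \<Rightarrow> nat \<Rightarrow> real) \<Rightarrow> bool" where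
  "psd n M \<longleftrightarrow> (\<forall>i<n. \<forall>j<n. M i j = M j i) \<and>
               (\<forall>x :: nat \<Rightarrow> real. (\<Sum>i<n. \<Sum>j<n. x i * M i j * x j) \<ge> 0)"

definition opnorm_on :: "nat set \<Rightarrow> (nat \<Rightarrow> nat \<Rightarrow> real) \<Rightarrow> real" where
  "opnorm_on T M = Sup {sqrt (\<Sum>i\<in>T. (\<Sum>j\<in>T. M i j * x j)\<^sup>2) | x. (\<Sum>j\<in>T. (x j)\<^sup>2) \<le> 1}"

definition sdp_feasible ::
  "nat \<Rightarrow> (nat \<Rightarrow> nat \<Rightarrow> real) \<Rightarrow> real \<Rightarrow> real \<Rightarrow> real \<Rightarrow> (nat \<Rightarrow> nat \<Rightarrow> real) \<Rightarrow> (nat \<Rightarrow> nat \<Rightarrow> real) \<Rightarrow> bool" where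
  "sdp_feasible n A a b chi W F \<longleftrightarrow>
     (\<forall>i<n. \<forall>j<n. 0 \<le> W i j \<and> W i j \<le> 1 \<and> 0 \<le> F i j \<and> F i j \<le> 1) \<and>
     trace_norm n W \<le> real n \<and>
     (let X = (\<lambda>i j. (A i j - a / real n - F i j) * W i j);
          c = chi * sqrt (a + b)
      in psd n (\<lambda>i j. X i j + (if i = j then c else 0)) \<and>
         psd n (\<lambda>i j. (if i = j then c else 0) - X i j))"

definition sdp_obj :: "nat \<Rightarrow> (nat \<Rightarrow> nat \<Rightarrow> real) \<Rightarrow> real" where
  "sdp_obj n W = (\<Sum>i<n. \<Sum>j<n. W i j)"

definition sdp_optimal ::
  "nat \<Rightarrow> (nat \<Rightarrow> nat \<Rightarrow> real) \<Rightarrow> real \<Rightarrow> real \<Rightarrow> real \<Rightarrow> (nat \<Rightarrow> nat \<Rightarrow> real) \<Rightarrow> (nat \<Rightarrow> nat \<Rightarrow> real) \<Rightarrow> bool" where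
  "sdp_optimal n A a b chi W F \<longleftrightarrow>
     sdp_feasible n A a b chi W F \<and>
     (\<forall>W' F'. sdp_feasible n A a b chi W' F' \<longrightarrow> sdp_obj n W' \<le> sdp_obj n W)"

definition chi_property :: "real \<Rightarrow> bool" where
  "chi_property chi \<longleftrightarrow>
     (\<forall>n k S a b. is_partition n k S \<and> 0 \<le> b \<and> b < a \<and> a \<le> real n \<longrightarrow>
        (let C = (sqrt a - sqrt b)\<^sup>2;
             L = (\<lambda>i j. if same_comm k S i j then 1 else -1 :: real)
         in measure_pmf.prob (sbm n k S a b)
              {A0. \<exists>T \<subseteq> {..<n}. real (card T) \<ge> (1 - exp (-2 * C)) * real n \<and>
                   opnorm_on T (\<lambda>i j. A0 i j - (a + b) / (2 * real n)
                                    - (a - b) / (2 * real n) * L i j) \<le> chi * sqrt (a + b)}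
            \<ge> 1 - 2 / (real n)\<^sup>2))"

end

theory Submission
  imports Defs
begin

no_notation Finite_Cartesian_Product.vec.vec_nth (infixl "$" 90)

lemma sym_real_eigen:
  fixes P :: "nat \<Rightarrow> nat \<Rightarrow> real"
  assumes n: "0 < n" and sym: "\<And>i j. i<n \<Longrightarrow> j<n \<Longrightarrow> P i j = P j i"
  shows "\<exists>\<mu> v. (\<Sum>i<n. (v i)^2) = 1 \<and> (\<forall>i<n. (\<Sum>j<n. P i j * v j) = \<mu> * v i)"
proof -
  define AC :: "complex mat" where "AC = mat n n (\<lambda>(i,j). complex_of_real (P i j))"
  have AC: "AC \<in> carrier_mat n n" by (simp add: AC_def)
  obtain as where cp: "char_poly AC = (\<Prod>a\<leftarrow>as. [:-a,1:])" and len: "length as = n"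
    using char_poly_factorized[OF AC] by blast
  define lam where "lam = as ! 0"
  have "lam \<in> set as" using len n by (simp add: lam_def)
  hence "poly (char_poly AC) lam = 0" unfolding cp by (rule linear_poly_root)
  hence "eigenvalue AC lam" using eigenvalue_root_char_poly[OF AC] by simp
  from find_eigenvector[OF AC this] obtain z where ev: "eigenvector AC z lam" by blast
  hence zc: "z \<in> carrier_vec n" and z0: "z \<noteq> 0\<^sub>v n" and eq: "AC *\<^sub>v z = lam \<cdot>\<^sub>v z"
    unfolding eigenvector_def using AC by auto
  have comp: "(\<Sum>j<n. complex_of_real (P i j) * z$j) = lam * z$i" if i: "i<n" for i
  proof -
    have "(AC *\<^sub>v z) $ i = lam * z$i" using eq i zc by simp
    moreover have "(AC *\<^sub>v z) $ i = (\<Sum>j<n. complex_of_real (P i j) * z$j)"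
      using i zc AC unfolding AC_def
      by (simp add: scalar_prod_def Matrix.row_def atLeast0LessThan)
    ultimately show ?thesis by simp
  qed
  define s where "s = (\<Sum>i<n. cnj (z$i) * (\<Sum>j<n. complex_of_real (P i j) * z$j))"
  define r where "r = (\<Sum>i<n. (cmod (z$i))^2)"
  have s1: "s = lam * of_real r"
  proof -
    have "s = (\<Sum>i<n. lam * (cnj (z$i) * z$i))" unfolding s_def
      by (rule sum.cong, simp, simp add: comp)
    also have "\<dots> = lam * of_real r" unfolding r_def of_real_sum complex_norm_square
      by (simp add: sum_distrib_left mult_ac)
    finally show ?thesis .
  qed
  have "cnj s = s"
  proof -
    have "cnj s = (\<Sum>i<n. \<Sum>j<n. z$i * (complex_of_real (P i j) * cnj (z$j)))"
      unfolding s_def by (simp add: sum_distrib_left)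
    also have "\<dots> = (\<Sum>j<n. \<Sum>i<n. z$i * (complex_of_real (P i j) * cnj (z$j)))"
      by (rule sum.swap)
    also have "\<dots> = s" unfolding s_def sum_distrib_left
      by (intro sum.cong refl, simp add: sym mult_ac)
    finally show ?thesis .
  qed
  hence ims: "Im s = 0" by (metis complex_cnj_cancel_iff complex_is_Real_iff Reals_cnj_iff)
  obtain i0 where i0: "i0 < n" "z$i0 \<noteq> 0" using z0 zc by (metis eq_vecI carrier_vecD index_zero_vec)
  have rpos: "r > 0" unfolding r_def
  proof (rule sum_pos2[of _ i0])
    show "0 < (cmod (z $ i0))^2" using i0 by simp
  qed (use i0 in auto)
  have imlam: "Im lam = 0" using ims rpos unfolding s1 by simp
  define \<mu> where "\<mu> = Re lam"
  have lamr: "lam = complex_of_real \<mu>" using imlam unfolding \<mu>_def by (simp add: complex_eq_iff)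
  have reeq: "(\<Sum>j<n. P i j * Re (z$j)) = \<mu> * Re (z$i)" if "i<n" for i
    using arg_cong[OF comp[OF that], of Re] by (simp add: lamr Re_sum)
  have imeq: "(\<Sum>j<n. P i j * Im (z$j)) = \<mu> * Im (z$i)" if "i<n" for i
    using arg_cong[OF comp[OF that], of Im] by (simp add: lamr Im_sum)
  obtain w where w: "\<And>i. i<n \<Longrightarrow> (\<Sum>j<n. P i j * w j) = \<mu> * w i" and wi: "w i0 \<noteq> 0"
  proof (cases "Re (z$i0) = 0")
    case True
    hence "Im (z$i0) \<noteq> 0" using i0 complex_eq_iff by force
    thus ?thesis using that[of "\<lambda>j. Im (z$j)"] imeq by blast
  next
    case False thus ?thesis using that[of "\<lambda>j. Re (z$j)"] reeq by blast
  qed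
  define q where "q = (\<Sum>i<n. (w i)^2)"
  have qpos: "q > 0" unfolding q_def
    by (rule sum_pos2[of _ i0], use i0 wi in auto)
  define v where "v = (\<lambda>i. w i / sqrt q)"
  have "(\<Sum>i<n. (v i)^2) = 1" unfolding v_def using qpos
    by (simp add: power_divide sum_divide_distrib[symmetric] q_def[symmetric])
  moreover have "\<forall>i<n. (\<Sum>j<n. P i j * v j) = \<mu> * v i"
    unfolding v_def using w by (simp add: sum_divide_distrib[symmetric] times_divide_eq_right)
  ultimately show ?thesis by blast
qed

lemma householder:
  fixes v :: "nat \<Rightarrow> real"
  assumes n: "0 < n" and unit: "(\<Sum>i<n. (v i)^2) = 1"
  shows "\<exists>H. H \<in> carrier_mat n n \<and> transpose_mat H = H \<and> H * H = 1\<^sub>m n \<and> (\<forall>i<n. H $$ (i,0) = v i)"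
proof (cases "v 0 = 1")
  case True
  have "(\<Sum>i<n. (v i)^2) = (v 0)^2 + (\<Sum>i\<in>{..<n}-{0}. (v i)^2)"
    using n by (simp add: sum.remove[of "{..<n}" 0])
  hence z: "(\<Sum>i\<in>{..<n}-{0}. (v i)^2) = 0" using unit True by simp
  have "\<forall>i\<in>{..<n}-{0}. (v i)^2 = 0"
    using sum_nonneg_eq_0_iff[THEN iffD1, OF _ _ z] by simp
  hence vi: "\<And>i. i<n \<Longrightarrow> i \<noteq> 0 \<Longrightarrow> v i = 0" by simp
  show ?thesis
    by (rule exI[of _ "1\<^sub>m n"], insert vi True n, auto)
next
  case False
  define c where "c = 1 - v 0"
  have c0: "c \<noteq> 0" using False by (simp add: c_def)
  define u where "u = (\<lambda>i. v i - (if i = 0 then 1 else 0))"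
  have uu: "(\<Sum>k<n. u k * u k) = 2 * c"
  proof -
    have "(\<Sum>k<n. u k * u k) = (\<Sum>k<n. (v k)^2 - 2 * (if k = 0 then v k else 0) + (if k = 0 then 1 else 0))"
      unfolding u_def by (rule sum.cong, auto simp: power2_eq_square algebra_simps)
    also have "\<dots> = 1 - 2 * v 0 + 1" using n unit
      by (simp add: sum.distrib sum_subtractf sum_distrib_left[symmetric])
    finally show ?thesis by (simp add: c_def)
  qed
  define H where "H = mat n n (\<lambda>(i,j). (if i = j then 1 else 0) - u i * u j / c)"
  have H: "H \<in> carrier_mat n n" by (simp add: H_def)
  have "transpose_mat H = H" by (rule eq_matI, auto simp: H_def mult.commute)
  moreover have "H * H = 1\<^sub>m n"
  proof (rule eq_matI)
    fix i j assume i: "i < dim_row (1\<^sub>m n)" and j: "j < dim_col (1\<^sub>m n)"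
    hence i: "i<n" and j: "j<n" by auto
    have "(H * H) $$ (i,j) = (\<Sum>k<n. ((if i = k then 1 else 0) - u i * u k / c) * ((if k = j then 1 else 0) - u k * u j / c))"
      using i j by (simp add: H_def scalar_prod_def atLeast0LessThan Matrix.row_def Matrix.col_def)
    also have "\<dots> = (\<Sum>k<n. (if i = k then 1 else 0) * (if k = j then 1 else 0))
        - (\<Sum>k<n. (if i = k then 1 else 0) * (u k * u j / c))
        - (\<Sum>k<n. (u i * u k / c) * (if k = j then 1 else 0))
        + (\<Sum>k<n. (u i * u k / c) * (u k * u j / c))"
      by (simp add: sum.distrib[symmetric] sum_subtractf[symmetric] algebra_simps)
    also have "\<dots> = (if i = j then 1 else 0) - u i * u j / c - u i * u j / c
        + u i * u j * (\<Sum>k<n. u k * u k) / (c * c)"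
    proof -
      have s1: "(\<Sum>k<n. (if i = k then 1 else 0) * (if k = j then 1 else 0)) = (if i = j then 1 else (0::real))"
        using i by (simp add: if_distrib[of "\<lambda>x. x * _"] cong: if_cong)
      have s2: "(\<Sum>k<n. (if i = k then 1 else 0) * (u k * u j / c)) = u i * u j / c"
        using i by (simp add: if_distrib[of "\<lambda>x. x * _"] sum_divide_distrib[symmetric] cong: if_cong)
      have s3: "(\<Sum>k<n. (u i * u k / c) * (if k = j then 1 else 0)) = u i * u j / c"
        using j by (simp add: if_distrib[of "\<lambda>x. _ * x"] sum_divide_distrib[symmetric] cong: if_cong)
      have s4: "(\<Sum>k<n. (u i * u k / c) * (u k * u j / c)) = u i * u j * (\<Sum>k<n. u k * u k) / (c * c)"
        by (simp add: sum_distrib_left sum_divide_distrib mult_ac)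
      show ?thesis using s1 s2 s3 s4 by simp
    qed
    also have "\<dots> = (if i = j then 1 else 0)" using i j c0 unfolding uu
      by (simp add: field_simps power2_eq_square)
    finally show "(H * H) $$ (i,j) = 1\<^sub>m n $$ (i,j)" using i j by simp
  qed (auto simp: H_def)
  moreover have "\<forall>i<n. H $$ (i,0) = v i" using n c0
    by (auto simp: H_def u_def c_def field_simps)
  ultimately show ?thesis using H by blast
qed

definition dmat :: "nat \<Rightarrow> (nat \<Rightarrow> real) \<Rightarrow> real mat" where
  "dmat n d = mat n n (\<lambda>(i,j). if i = j then d i else 0)"

lemma dmat_carrier[simp]: "dmat n d \<in> carrier_mat n n" by (simp add: dmat_def)

lemma mult_entry:
  assumes "A \<in> carrier_mat n m" "B \<in> carrier_mat m p" "i < n" "j < p"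
  shows "(A * B) $$ (i,j) = (\<Sum>k<m. A $$ (i,k) * B $$ (k,j))"
  using assms by (simp add: scalar_prod_def atLeast0LessThan Matrix.row_def Matrix.col_def)

lemma diag_entry:
  assumes G: "G \<in> carrier_mat n n" and i: "i < n" and j: "j < n"
  shows "(G * dmat n d * transpose_mat G) $$ (i,j) = (\<Sum>k<n. G $$ (i,k) * d k * G $$ (j,k))"
proof -
  have GD: "G * dmat n d \<in> carrier_mat n n" using G by simp
  have "(G * dmat n d * transpose_mat G) $$ (i,j) = (\<Sum>k<n. (G * dmat n d) $$ (i,k) * G $$ (j,k))"
    using mult_entry[OF GD _ i j, of "transpose_mat G"] G j by simp
  also have "\<dots> = (\<Sum>k<n. G $$ (i,k) * d k * G $$ (j,k))"
  proof (rule sum.cong[OF refl])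
    fix k assume k: "k \<in> {..<n}"
    have "(G * dmat n d) $$ (i,k) = (\<Sum>l<n. G $$ (i,l) * (if l = k then d l else 0))"
      using mult_entry[OF G dmat_carrier i, of k d] k by (simp add: dmat_def)
    also have "\<dots> = G $$ (i,k) * d k" using k
      by (simp add: if_distrib[of "\<lambda>x. _ * x"] cong: if_cong)
    finally show "(G * dmat n d) $$ (i,k) * G $$ (j,k) = G $$ (i,k) * d k * G $$ (j,k)" by simp
  qed
  finally show ?thesis .
qed

lemma spectral_mat:
  fixes A :: "real mat"
  assumes "A \<in> carrier_mat n n" "transpose_mat A = A"
  shows "\<exists>V d. V \<in> carrier_mat n n \<and> transpose_mat V * V = 1\<^sub>m n \<and> A = V * dmat n d * transpose_mat V"
  using assms
proof (induction n arbitrary: A)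
  case 0
  show ?case
    by (rule exI[of _ "1\<^sub>m 0"], rule exI[of _ "\<lambda>_. 0"], insert 0, auto intro!: eq_matI)
next
  case (Suc m A)
  let ?n = "Suc m"
  have A: "A \<in> carrier_mat ?n ?n" and At: "transpose_mat A = A" using Suc by auto
  have symA: "A $$ (i,j) = A $$ (j,i)" if "i < ?n" "j < ?n" for i j
    using arg_cong[OF At, of "\<lambda>M. M $$ (i,j)"] that A by auto
  obtain \<mu> v where vu: "(\<Sum>i<?n. (v i)^2) = 1" and ev: "\<And>i. i<?n \<Longrightarrow> (\<Sum>j<?n. A $$ (i,j) * v j) = \<mu> * v i"
    using sym_real_eigen[of ?n "\<lambda>i j. A $$ (i,j)"] symA by blast
  obtain H where H: "H \<in> carrier_mat ?n ?n" and Ht: "transpose_mat H = H" and HH: "H * H = 1\<^sub>m ?n"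
    and H0: "\<And>i. i < ?n \<Longrightarrow> H $$ (i,0) = v i"
    using householder[of ?n v] vu by auto
  define B where "B = H * A * H"
  have B: "B \<in> carrier_mat ?n ?n" using H A by (simp add: B_def)
  have Bt: "transpose_mat B = B" unfolding B_def
    using H A by (simp add: transpose_mult[of _ ?n ?n _ ?n] Ht At assoc_mult_mat[of _ ?n ?n _ ?n _ ?n])
  have colH: "col H 0 = vec ?n v" using H H0 by (auto intro!: eq_vecI)
  have Av: "A *\<^sub>v vec ?n v = \<mu> \<cdot>\<^sub>v vec ?n v"
    using A ev by (auto intro!: eq_vecI simp: scalar_prod_def atLeast0LessThan Matrix.row_def)
  have colB: "col B 0 = \<mu> \<cdot>\<^sub>v unit_vec ?n 0"
  proof -
    have "col B 0 = (H * A) *\<^sub>v col H 0" unfolding B_def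
      by (rule col_mult2[of _ ?n ?n], insert H A, auto)
    also have "\<dots> = H *\<^sub>v (A *\<^sub>v vec ?n v)" unfolding colH
      by (rule assoc_mult_mat_vec[of _ ?n ?n _ ?n], insert H A, auto)
    also have "\<dots> = \<mu> \<cdot>\<^sub>v (H *\<^sub>v col H 0)" unfolding Av colH
      by (rule mult_mat_vec[of _ ?n ?n], insert H, auto)
    also have "H *\<^sub>v col H 0 = col (H * H) 0"
      by (rule col_mult2[symmetric, of _ ?n ?n], insert H, auto)
    also have "\<dots> = unit_vec ?n 0" unfolding HH by simp
    finally show ?thesis .
  qed
  have Bi0: "B $$ (i,0) = (if i = 0 then \<mu> else 0)" if "i < ?n" for i
    using arg_cong[OF colB, of "\<lambda>w. w $ i"] that B by (auto simp: unit_vec_def)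
  have B0j: "B $$ (0,j) = (if j = 0 then \<mu> else 0)" if "j < ?n" for j
    using arg_cong[OF Bt, of "\<lambda>M. M $$ (j,0)"] Bi0[OF that] that B by auto
  define A' where "A' = mat m m (\<lambda>(i,j). B $$ (Suc i, Suc j))"
  have A': "A' \<in> carrier_mat m m" by (simp add: A'_def)
  have symB: "B $$ (i,j) = B $$ (j,i)" if "i < ?n" "j < ?n" for i j
    using arg_cong[OF Bt, of "\<lambda>M. M $$ (i,j)"] that B by auto
  have A't: "transpose_mat A' = A'"
    using symB by (auto intro!: eq_matI simp: A'_def)
  obtain V' d' where V': "V' \<in> carrier_mat m m" and V'V': "transpose_mat V' * V' = 1\<^sub>m m"
    and A'eq: "A' = V' * dmat m d' * transpose_mat V'"
    using Suc.IH[OF A' A't] by blast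
  define G where "G = mat ?n ?n (\<lambda>(i,k). if i = 0 \<and> k = 0 then 1 else if i = 0 \<or> k = 0 then 0 else V' $$ (i - 1, k - 1))"
  define d where "d = (\<lambda>k. if k = 0 then \<mu> else d' (k - 1))"
  have G: "G \<in> carrier_mat ?n ?n" by (simp add: G_def)
  have BG: "B = G * dmat ?n d * transpose_mat G"
  proof (rule eq_matI)
    fix i j assume "i < dim_row (G * dmat ?n d * transpose_mat G)" "j < dim_col (G * dmat ?n d * transpose_mat G)"
    hence i: "i < ?n" and j: "j < ?n" using G by auto
    have "(G * dmat ?n d * transpose_mat G) $$ (i,j) = (\<Sum>k<?n. G $$ (i,k) * d k * G $$ (j,k))"
      by (rule diag_entry[OF G i j])
    also have "\<dots> = G $$ (i,0) * d 0 * G $$ (j,0) + (\<Sum>k<m. G $$ (i,Suc k) * d (Suc k) * G $$ (j,Suc k))"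
      by (rule sum.lessThan_Suc_shift)
    also have "\<dots> = B $$ (i,j)"
    proof (cases i)
      case 0 thus ?thesis using j B0j[OF j] by (simp add: G_def d_def)
    next
      case (Suc i')
      note i' = this
      show ?thesis
      proof (cases j)
        case 0 thus ?thesis using i Bi0[OF i] i' by (simp add: G_def d_def)
      next
        case (Suc j')
        have ij: "i' < m" "j' < m" using i j i' Suc by auto
        have "(\<Sum>k<m. G $$ (i,Suc k) * d (Suc k) * G $$ (j,Suc k)) = (\<Sum>k<m. V' $$ (i',k) * d' k * V' $$ (j',k))"
          using i j i' Suc by (intro sum.cong, auto simp: G_def d_def)
        also have "\<dots> = A' $$ (i',j')" unfolding A'eq by (rule diag_entry[OF V' ij, symmetric])
        also have "\<dots> = B $$ (i,j)" using ij i' Suc by (simp add: A'_def)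
        finally show ?thesis using i' Suc i j by (simp add: G_def)
      qed
    qed
    finally show "B $$ (i,j) = (G * dmat ?n d * transpose_mat G) $$ (i,j)" ..
  qed (insert B G, auto)
  have GG: "transpose_mat G * G = 1\<^sub>m ?n"
  proof (rule eq_matI)
    fix i j assume "i < dim_row (1\<^sub>m ?n)" "j < dim_col (1\<^sub>m ?n)"
    hence i: "i < ?n" and j: "j < ?n" by auto
    have "(transpose_mat G * G) $$ (i,j) = (\<Sum>r<?n. G $$ (r,i) * G $$ (r,j))"
      using mult_entry[of "transpose_mat G" ?n ?n G ?n i j] G i j by simp
    also have "\<dots> = G $$ (0,i) * G $$ (0,j) + (\<Sum>r<m. G $$ (Suc r,i) * G $$ (Suc r,j))"
      by (rule sum.lessThan_Suc_shift)
    also have "\<dots> = 1\<^sub>m ?n $$ (i,j)"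
    proof (cases i)
      case 0 thus ?thesis using j by (simp add: G_def)
    next
      case (Suc i')
      note i' = this
      show ?thesis
      proof (cases j)
        case 0 thus ?thesis using i i' by (simp add: G_def)
      next
        case (Suc j')
        have ij: "i' < m" "j' < m" using i j i' Suc by auto
        have "(\<Sum>r<m. G $$ (Suc r,i) * G $$ (Suc r,j)) = (\<Sum>r<m. V' $$ (r,i') * V' $$ (r,j'))"
          using i j i' Suc by (intro sum.cong, auto simp: G_def)
        also have "\<dots> = (transpose_mat V' * V') $$ (i',j')"
          using mult_entry[of "transpose_mat V'" m m V' m i' j'] V' ij by simp
        also have "\<dots> = 1\<^sub>m ?n $$ (i,j)" unfolding V'V' using ij i' Suc by simp
        finally show ?thesis using i' Suc i j by (simp add: G_def)
      qed
    qed
    finally show "(transpose_mat G * G) $$ (i,j) = 1\<^sub>m ?n $$ (i,j)" .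
  qed (insert G, auto)
  define V where "V = H * G"
  have V: "V \<in> carrier_mat ?n ?n" using H G by (simp add: V_def)
  have Vt: "transpose_mat V = transpose_mat G * H" unfolding V_def
    using transpose_mult[OF H G] Ht by simp
  have "transpose_mat V * V = (transpose_mat G * H) * (H * G)" unfolding Vt by (simp add: V_def)
  also have "\<dots> = transpose_mat G * (H * H) * G"
    using H G by (simp add: assoc_mult_mat[of _ ?n ?n _ ?n _ ?n])
  also have "\<dots> = 1\<^sub>m ?n" unfolding HH using G GG by simp
  finally have VV: "transpose_mat V * V = 1\<^sub>m ?n" .
  have "A = (H * H) * A * (H * H)" unfolding HH using A by simp
  also have "\<dots> = H * B * H" unfolding B_def
    using H A by (simp add: assoc_mult_mat[of _ ?n ?n _ ?n _ ?n])
  also have "\<dots> = (H * G) * dmat ?n d * (transpose_mat G * H)"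
  proof -
    have GD: "G * dmat ?n d \<in> carrier_mat ?n ?n" using G by simp
    have GT: "transpose_mat G \<in> carrier_mat ?n ?n" using G by simp
    have "H * B * H = H * (G * dmat ?n d) * transpose_mat G * H"
      unfolding BG using assoc_mult_mat[OF H GD GT] by simp
    also have "H * (G * dmat ?n d) = H * G * dmat ?n d" using assoc_mult_mat[OF H G dmat_carrier] by simp
    also have "H * G * dmat ?n d * transpose_mat G * H = (H * G * dmat ?n d) * (transpose_mat G * H)"
      by (rule assoc_mult_mat[of _ ?n ?n _ ?n _ ?n], insert H G, auto intro!: mult_carrier_mat)
    finally show ?thesis .
  qed
  also have "\<dots> = V * dmat ?n d * transpose_mat V" unfolding Vt by (simp add: V_def)
  finally show ?case using V VV by blast
qed

lemma prod_lin_nonzero: "(\<Prod>a\<leftarrow>es. [:- a, 1:]) \<noteq> (0 :: real poly)"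
  by (auto simp: prod_list_zero_iff)

lemma roots_sum_gen:
  fixes f :: "real \<Rightarrow> real"
  assumes "finite S" "{r. poly (\<Prod>a\<leftarrow>es. [:- a, 1:]) r = 0} \<subseteq> S"
  shows "(\<Sum>r\<in>S. f r * real (order r (\<Prod>a\<leftarrow>es. [:- a, 1:]))) = (\<Sum>a\<leftarrow>es. f a)"
  using assms(2)
proof (induction es)
  case Nil
  show ?case by simp
next
  case (Cons e es)
  let ?p = "\<Prod>a\<leftarrow>es. [:- a, 1:]"
  have pe: "(\<Prod>a\<leftarrow>e#es. [:- a, 1:]) = [:-e,1:] * ?p" by simp
  have sub: "{r. poly ?p r = 0} \<subseteq> S" using Cons.prems unfolding pe by auto
  have eS: "e \<in> S" using Cons.prems unfolding pe by auto
  have ord: "order r ([:-e,1:] * ?p) = (if r = e then 1 else 0) + order r ?p" for r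
  proof -
    have h: "[:-e,1:] \<noteq> (0::real poly)" by simp
    have nz: "[:-e,1:] * ?p \<noteq> 0" by (metis mult_eq_0_iff prod_lin_nonzero h)
    show ?thesis unfolding order_mult[OF nz] order_linear' by auto
  qed
  have "(\<Sum>r\<in>S. f r * real (order r (\<Prod>a\<leftarrow>e#es. [:- a, 1:])))
      = (\<Sum>r\<in>S. (if r = e then f r else 0)) + (\<Sum>r\<in>S. f r * real (order r ?p))"
    unfolding pe ord by (simp add: sum.distrib[symmetric] algebra_simps, rule sum.cong, auto)
  also have "\<dots> = f e + (\<Sum>a\<leftarrow>es. f a)" using Cons.IH[OF sub] eS assms(1)
    by (simp add: sum.delta')
  finally show ?case by simp
qed

lemma roots_sum:
  fixes f :: "real \<Rightarrow> real"
  shows "(\<Sum>r\<in>{r. poly (\<Prod>a\<leftarrow>es. [:- a, 1:]) r = 0}. f r * real (order r (\<Prod>a\<leftarrow>es. [:- a, 1:]))) = (\<Sum>a\<leftarrow>es. f a)"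
  by (rule roots_sum_gen, rule poly_roots_finite, rule prod_lin_nonzero, simp)

lemma char_poly_dmat: "char_poly (dmat n d) = (\<Prod>a\<leftarrow>map d [0..<n]. [:- a, 1:])"
proof -
  have ut: "upper_triangular (dmat n d)" by (auto simp: upper_triangular_def dmat_def)
  have "diag_mat (dmat n d) = map d [0..<n]"
    by (rule nth_equalityI, auto simp: diag_mat_def dmat_def)
  thus ?thesis using char_poly_upper_triangular[OF dmat_carrier ut] by simp
qed

lemma char_poly_spec:
  assumes V: "V \<in> carrier_mat n n" and VV: "transpose_mat V * V = 1\<^sub>m n"
    and A: "A = V * dmat n d * transpose_mat V"
  shows "char_poly A = (\<Prod>a\<leftarrow>map d [0..<n]. [:- a, 1:])"
proof -
  have VV': "V * transpose_mat V = 1\<^sub>m n"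
    using mat_mult_left_right_inverse[of "transpose_mat V" n V] V VV by simp
  have "similar_mat_wit A (dmat n d) V (transpose_mat V)"
    unfolding similar_mat_wit_def Let_def using V VV VV' A by auto
  hence "char_poly A = char_poly (dmat n d)"
    by (intro char_poly_similar, auto simp: similar_mat_def)
  thus ?thesis by (simp add: char_poly_dmat)
qed

lemma trace_norm_spec:
  assumes V: "V \<in> carrier_mat n n" and VV: "transpose_mat V * V = 1\<^sub>m n"
    and A: "transpose_mat (to_mat n W) * to_mat n W = V * dmat n e * transpose_mat V"
  shows "trace_norm n W = (\<Sum>k<n. sqrt (e k))"
proof -
  have cp: "char_poly (transpose_mat (to_mat n W) * to_mat n W) = (\<Prod>a\<leftarrow>map e [0..<n]. [:- a, 1:])"
    by (rule char_poly_spec[OF V VV A])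
  have "trace_norm n W = (\<Sum>a\<leftarrow>map e [0..<n]. sqrt a)"
    unfolding trace_norm_def Let_def cp by (rule roots_sum)
  also have "\<dots> = (\<Sum>k<n. sqrt (e k))"
    by (simp add: sum_list_sum_nth atLeast0LessThan)
  finally show ?thesis .
qed

definition qf :: "nat \<Rightarrow> (nat \<Rightarrow> nat \<Rightarrow> real) \<Rightarrow> (nat \<Rightarrow> real) \<Rightarrow> (nat \<Rightarrow> real) \<Rightarrow> real" where
  "qf n N x y = (\<Sum>i<n. \<Sum>j<n. x i * N i j * y j)"

lemma qf_sym:
  assumes "\<And>i j. i<n \<Longrightarrow> j<n \<Longrightarrow> N i j = N j i"
  shows "qf n N y x = qf n N x y"
proof -
  have "qf n N y x = (\<Sum>j<n. \<Sum>i<n. y i * N i j * x j)" unfolding qf_def by (rule sum.swap)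
  also have "\<dots> = qf n N x y" unfolding qf_def
    by (intro sum.cong refl, simp add: assms mult_ac)
  finally show ?thesis .
qed

lemma qf_polar:
  "qf n N (\<lambda>i. x i + y i) (\<lambda>i. x i + y i) - qf n N (\<lambda>i. x i - y i) (\<lambda>i. x i - y i)
     = 2 * (qf n N x y + qf n N y x)"
  unfolding qf_def
  by (simp add: sum_subtractf[symmetric] sum.distrib[symmetric] sum_distrib_left algebra_simps)

lemma qf_scale: "qf n N (\<lambda>i. t * x i) (\<lambda>i. s * y i) = t * s * qf n N x y"
  unfolding qf_def by (simp add: sum_distrib_left mult_ac)

lemma sq_polar: "(\<Sum>i<n. (x i + y i)^2) + (\<Sum>i<n. (x i - y i)^2) = 2 * ((\<Sum>i<n. (x i)^2) + (\<Sum>i<n. (y i :: real)^2))"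
  by (simp add: sum.distrib[symmetric] sum_distrib_left power2_eq_square algebra_simps)

lemma bilinear_bound:
  fixes N :: "nat \<Rightarrow> nat \<Rightarrow> real"
  assumes sym: "\<And>i j. i<n \<Longrightarrow> j<n \<Longrightarrow> N i j = N j i"
    and qb: "\<And>x. \<bar>qf n N x x\<bar> \<le> \<mu> * (\<Sum>i<n. (x i)^2)" and mu: "0 \<le> \<mu>"
  shows "qf n N x y \<le> \<mu> * sqrt (\<Sum>i<n. (x i)^2) * sqrt (\<Sum>i<n. (y i)^2)"
proof -
  have H1: "qf n N a b \<le> \<mu> / 2 * ((\<Sum>i<n. (a i)^2) + (\<Sum>i<n. (b i)^2))" for a b
  proof -
    have "4 * qf n N a b = qf n N (\<lambda>i. a i + b i) (\<lambda>i. a i + b i) - qf n N (\<lambda>i. a i - b i) (\<lambda>i. a i - b i)"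
      using qf_polar[where n=n and N=N and x=a and y=b] qf_sym[OF sym, where y=b and x=a] by simp
    also have "\<dots> \<le> \<mu> * (\<Sum>i<n. (a i + b i)^2) + \<mu> * (\<Sum>i<n. (a i - b i)^2)"
      using qb[of "\<lambda>i. a i + b i"] qb[of "\<lambda>i. a i - b i"] by linarith
    also have "\<dots> = \<mu> * ((\<Sum>i<n. (a i + b i)^2) + (\<Sum>i<n. (a i - b i)^2))"
      by (simp add: distrib_left)
    also have "\<dots> = 2 * \<mu> * ((\<Sum>i<n. (a i)^2) + (\<Sum>i<n. (b i)^2))"
      unfolding sq_polar by simp
    finally show ?thesis by simp
  qed
  define X where "X = (\<Sum>i<n. (x i)^2)"
  define Y where "Y = (\<Sum>i<n. (y i)^2)"
  have X0: "X \<ge> 0" "Y \<ge> 0" unfolding X_def Y_def by (auto intro: sum_nonneg)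
  show ?thesis
  proof (cases "X = 0 \<or> Y = 0")
    case True
    hence "(\<forall>i<n. x i = 0) \<or> (\<forall>i<n. y i = 0)"
      unfolding X_def Y_def by (auto simp: sum_nonneg_eq_0_iff)
    hence "qf n N x y = 0" unfolding qf_def by auto
    thus ?thesis using mu by (simp add: X_def[symmetric] Y_def[symmetric] X0)
  next
    case False
    hence Xp: "X > 0" and Yp: "Y > 0" using X0 by auto
    define t where "t = sqrt (sqrt Y / sqrt X)"
    have tp: "t > 0" using Xp Yp by (simp add: t_def)
    have t2: "t^2 = sqrt Y / sqrt X" using Xp Yp by (simp add: t_def)
    have "qf n N x y = qf n N (\<lambda>i. t * x i) (\<lambda>i. (1/t) * y i)"
      using tp qf_scale[where n=n and N=N and t=t and x=x and s="1/t" and y=y] by simp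
    also have "\<dots> \<le> \<mu> / 2 * ((\<Sum>i<n. (t * x i)^2) + (\<Sum>i<n. ((1/t) * y i)^2))" by (rule H1)
    also have "(\<Sum>i<n. (t * x i)^2) = t^2 * X" unfolding X_def
      by (simp add: power_mult_distrib sum_distrib_left)
    also have "(\<Sum>i<n. ((1/t) * y i)^2) = Y / t^2" unfolding Y_def
      by (simp add: power_mult_distrib sum_distrib_left power_divide sum_divide_distrib)
    also have "t^2 * X + Y / t^2 = 2 * (sqrt X * sqrt Y)" unfolding t2 using Xp Yp
      by (simp add: field_simps)
    finally show ?thesis by (simp add: X_def Y_def mult_ac)
  qed
qed

lemma to_mat_carrier[simp]: "to_mat n W \<in> carrier_mat n n" by (simp add: to_mat_def)
lemma to_mat_index[simp]: "i < n \<Longrightarrow> j < n \<Longrightarrow> to_mat n W $$ (i,j) = W i j" by (simp add: to_mat_def)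

lemma sandwich:
  fixes V D :: "real mat"
  assumes V: "V \<in> carrier_mat n n" and D: "D \<in> carrier_mat n n"
  shows "transpose_mat V * (V * D * transpose_mat V) * V = (transpose_mat V * V) * D * (transpose_mat V * V)"
proof -
  have Vt: "transpose_mat V \<in> carrier_mat n n" using V by simp
  have VD: "V * D \<in> carrier_mat n n" using V D by simp
  have "transpose_mat V * (V * D * transpose_mat V) = (transpose_mat V * (V * D)) * transpose_mat V"
    using assoc_mult_mat[OF Vt VD Vt] by simp
  also have "transpose_mat V * (V * D) = (transpose_mat V * V) * D"
    using assoc_mult_mat[OF Vt V D] by simp
  finally have 1: "transpose_mat V * (V * D * transpose_mat V) = transpose_mat V * V * D * transpose_mat V" .
  have VVD: "transpose_mat V * V * D \<in> carrier_mat n n" using V D by simp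
  show ?thesis unfolding 1 using assoc_mult_mat[OF VVD Vt V] by simp
qed

lemma VVt:
  fixes V :: "real mat"
  assumes V: "V \<in> carrier_mat n n" and VV: "transpose_mat V * V = 1\<^sub>m n"
  shows "V * transpose_mat V = 1\<^sub>m n"
  using mat_mult_left_right_inverse[of "transpose_mat V" n V] V VV by simp

lemma trace_duality:
  fixes N W :: "nat \<Rightarrow> nat \<Rightarrow> real"
  assumes sym: "\<And>i j. i<n \<Longrightarrow> j<n \<Longrightarrow> N i j = N j i"
    and qb: "\<And>x. \<bar>qf n N x x\<bar> \<le> \<mu> * (\<Sum>i<n. (x i)^2)" and mu: "0 \<le> \<mu>"
  shows "(\<Sum>i<n. \<Sum>j<n. N i j * W i j) \<le> \<mu> * trace_norm n W"
proof -
  define Wm where "Wm = to_mat n W"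
  have Wm: "Wm \<in> carrier_mat n n" by (simp add: Wm_def)
  define P where "P = transpose_mat Wm * Wm"
  have P: "P \<in> carrier_mat n n" using Wm by (simp add: P_def)
  have Pt: "transpose_mat P = P" unfolding P_def using transpose_mult[of "transpose_mat Wm" n n Wm n] Wm by simp
  obtain V d where V: "V \<in> carrier_mat n n" and VV: "transpose_mat V * V = 1\<^sub>m n"
    and Pd: "P = V * dmat n d * transpose_mat V"
    using spectral_mat[OF P Pt] by blast
  have tn: "trace_norm n W = (\<Sum>k<n. sqrt (d k))"
    using trace_norm_spec[OF V VV, of W d] Pd unfolding P_def Wm_def by simp
  have VV': "V * transpose_mat V = 1\<^sub>m n" by (rule VVt[OF V VV])
  define U where "U = Wm * V"
  have U: "U \<in> carrier_mat n n" using Wm V by (simp add: U_def)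
  have F1: "W i j = (\<Sum>k<n. U $$ (i,k) * V $$ (j,k))" if ij: "i<n" "j<n" for i j
  proof -
    have "Wm = Wm * (V * transpose_mat V)" unfolding VV' using Wm by simp
    also have "\<dots> = U * transpose_mat V" unfolding U_def
      by (rule assoc_mult_mat[symmetric, of _ n n _ n _ n], insert Wm V, auto)
    finally have "Wm $$ (i,j) = (U * transpose_mat V) $$ (i,j)" by simp
    also have "\<dots> = (\<Sum>k<n. U $$ (i,k) * V $$ (j,k))"
      using mult_entry[OF U _ ij, of "transpose_mat V"] V ij by simp
    finally show ?thesis using ij by (simp add: Wm_def)
  qed
  have F2: "(\<Sum>i<n. (U $$ (i,k))^2) = d k" if k: "k<n" for k
  proof -
    have "transpose_mat U * U = transpose_mat V * P * V"
      unfolding U_def P_def using transpose_mult[OF Wm V] Wm V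
      by (simp add: assoc_mult_mat[of _ n n _ n _ n])
    also have "\<dots> = (transpose_mat V * V) * dmat n d * (transpose_mat V * V)" unfolding Pd
      by (rule sandwich[OF V dmat_carrier])
    also have "\<dots> = dmat n d" unfolding VV
      by (simp add: left_mult_one_mat[OF dmat_carrier] right_mult_one_mat[OF dmat_carrier])
    finally have "(transpose_mat U * U) $$ (k,k) = d k" using k by (simp add: dmat_def)
    moreover have "(transpose_mat U * U) $$ (k,k) = (\<Sum>i<n. (U $$ (i,k))^2)"
      using mult_entry[of "transpose_mat U" n n U n k k] U k by (simp add: power2_eq_square)
    ultimately show ?thesis by simp
  qed
  have F3: "(\<Sum>j<n. (V $$ (j,k))^2) = 1" if k: "k<n" for k
  proof -
    have "(transpose_mat V * V) $$ (k,k) = (\<Sum>j<n. (V $$ (j,k))^2)"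
      using mult_entry[of "transpose_mat V" n n V n k k] V k by (simp add: power2_eq_square)
    thus ?thesis unfolding VV using k by simp
  qed
  have "(\<Sum>i<n. \<Sum>j<n. N i j * W i j) = (\<Sum>i<n. \<Sum>j<n. \<Sum>k<n. U $$ (i,k) * N i j * V $$ (j,k))"
    by (intro sum.cong refl, simp add: F1 sum_distrib_left mult_ac)
  also have "\<dots> = (\<Sum>i<n. \<Sum>k<n. \<Sum>j<n. U $$ (i,k) * N i j * V $$ (j,k))"
    by (rule sum.cong[OF refl], rule sum.swap)
  also have "\<dots> = (\<Sum>k<n. \<Sum>i<n. \<Sum>j<n. U $$ (i,k) * N i j * V $$ (j,k))"
    by (rule sum.swap)
  also have "\<dots> = (\<Sum>k<n. qf n N (\<lambda>i. U $$ (i,k)) (\<lambda>j. V $$ (j,k)))"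
    unfolding qf_def by (rule refl)
  also have "\<dots> \<le> (\<Sum>k<n. \<mu> * sqrt (d k))"
  proof (rule sum_mono)
    fix k assume k: "k \<in> {..<n}"
    show "qf n N (\<lambda>i. U $$ (i,k)) (\<lambda>j. V $$ (j,k)) \<le> \<mu> * sqrt (d k)"
      using bilinear_bound[OF sym qb mu, of "\<lambda>i. U $$ (i,k)" "\<lambda>j. V $$ (j,k)"] F2 F3 k by simp
  qed
  also have "\<dots> = \<mu> * trace_norm n W" unfolding tn by (simp add: sum_distrib_left)
  finally show ?thesis .
qed

lemma dmat_sq: "dmat n d * dmat n d = dmat n (\<lambda>k. d k * d k)"
proof (rule eq_matI)
  fix i j assume "i < dim_row (dmat n (\<lambda>k. d k * d k))" "j < dim_col (dmat n (\<lambda>k. d k * d k))"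
  hence i: "i < n" and j: "j < n" by (auto simp: dmat_def)
  have "(dmat n d * dmat n d) $$ (i,j) = (\<Sum>k<n. (if i = k then d i else 0) * (if k = j then d k else 0))"
    using mult_entry[OF dmat_carrier dmat_carrier i j] i j by (simp add: dmat_def)
  also have "\<dots> = (if i = j then d i * d i else 0)" using i
    by (simp add: if_distrib[of "\<lambda>x. x * _"] cong: if_cong)
  finally show "(dmat n d * dmat n d) $$ (i,j) = dmat n (\<lambda>k. d k * d k) $$ (i,j)"
    using i j by (simp add: dmat_def)
qed (auto simp: dmat_def)

lemma trace_norm_psd:
  fixes W :: "nat \<Rightarrow> nat \<Rightarrow> real"
  assumes sym: "\<And>i j. i<n \<Longrightarrow> j<n \<Longrightarrow> W i j = W j i"
    and psd: "\<And>x. qf n W x x \<ge> 0"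
  shows "trace_norm n W = (\<Sum>i<n. W i i)"
proof -
  define Wm where "Wm = to_mat n W"
  have Wm: "Wm \<in> carrier_mat n n" by (simp add: Wm_def)
  have Wt: "transpose_mat Wm = Wm" using sym by (auto intro!: eq_matI simp: Wm_def to_mat_def)
  obtain V d where V: "V \<in> carrier_mat n n" and VV: "transpose_mat V * V = 1\<^sub>m n"
    and Wd: "Wm = V * dmat n d * transpose_mat V"
    using spectral_mat[OF Wm Wt] by blast
  have VV': "V * transpose_mat V = 1\<^sub>m n" by (rule VVt[OF V VV])
  have Vt: "transpose_mat V \<in> carrier_mat n n" using V by simp
  have VD: "V * dmat n d \<in> carrier_mat n n" using V by simp
  have "transpose_mat Wm * Wm = (V * dmat n d * transpose_mat V) * (V * dmat n d * transpose_mat V)"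
    unfolding Wt using Wd by simp
  also have "\<dots> = V * dmat n d * (transpose_mat V * (V * dmat n d * transpose_mat V))"
    by (rule assoc_mult_mat[OF VD Vt], insert VD Vt, auto)
  also have "transpose_mat V * (V * dmat n d * transpose_mat V) = dmat n d * transpose_mat V"
  proof -
    have "transpose_mat V * (V * dmat n d * transpose_mat V) = transpose_mat V * (V * dmat n d) * transpose_mat V"
      using assoc_mult_mat[OF Vt VD Vt] by simp
    also have "transpose_mat V * (V * dmat n d) = dmat n d"
      using assoc_mult_mat[OF Vt V dmat_carrier[of n d]] VV by (simp add: left_mult_one_mat[OF dmat_carrier])
    finally show ?thesis .
  qed
  also have "V * dmat n d * (dmat n d * transpose_mat V) = V * (dmat n d * dmat n d) * transpose_mat V"
    using assoc_mult_mat[OF VD dmat_carrier[of n d] Vt] assoc_mult_mat[OF V dmat_carrier[of n d] dmat_carrier[of n d]] by simp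
  finally have P: "transpose_mat Wm * Wm = V * dmat n (\<lambda>k. d k * d k) * transpose_mat V"
    unfolding dmat_sq .
  have tn: "trace_norm n W = (\<Sum>k<n. sqrt (d k * d k))"
    using trace_norm_spec[OF V VV, of W "\<lambda>k. d k * d k"] P unfolding Wm_def by simp
  have dk: "d k = (\<Sum>i<n. \<Sum>j<n. V $$ (i,k) * W i j * V $$ (j,k))" if k: "k < n" for k
  proof -
    have "transpose_mat V * Wm * V = (transpose_mat V * V) * dmat n d * (transpose_mat V * V)"
      unfolding Wd by (rule sandwich[OF V dmat_carrier])
    also have "\<dots> = dmat n d" unfolding VV
      by (simp add: left_mult_one_mat[OF dmat_carrier] right_mult_one_mat[OF dmat_carrier])
    finally have "(transpose_mat V * Wm * V) $$ (k,k) = d k" using k by (simp add: dmat_def)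
    moreover have "(transpose_mat V * Wm * V) $$ (k,k) = (\<Sum>j<n. (transpose_mat V * Wm) $$ (k,j) * V $$ (j,k))"
      using mult_entry[of "transpose_mat V * Wm" n n V n k k] V Wm k by simp
    moreover have "(transpose_mat V * Wm) $$ (k,j) = (\<Sum>i<n. V $$ (i,k) * W i j)" if "j < n" for j
      using mult_entry[of "transpose_mat V" n n Wm n k j] V Wm k that by (simp add: Wm_def)
    ultimately have "d k = (\<Sum>j<n. (\<Sum>i<n. V $$ (i,k) * W i j) * V $$ (j,k))" by simp
    also have "\<dots> = (\<Sum>j<n. \<Sum>i<n. V $$ (i,k) * W i j * V $$ (j,k))"
      by (simp add: sum_distrib_right)
    also have "\<dots> = (\<Sum>i<n. \<Sum>j<n. V $$ (i,k) * W i j * V $$ (j,k))" by (rule sum.swap)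
    finally show ?thesis .
  qed
  have dpos: "d k \<ge> 0" if "k < n" for k
    using psd[of "\<lambda>i. V $$ (i,k)"] dk[OF that] unfolding qf_def by simp
  have "trace_norm n W = (\<Sum>k<n. d k)" unfolding tn
    by (rule sum.cong[OF refl], simp add: dpos real_sqrt_mult_self)
  also have "\<dots> = (\<Sum>k<n. \<Sum>i<n. \<Sum>j<n. V $$ (i,k) * W i j * V $$ (j,k))" using dk by simp
  also have "\<dots> = (\<Sum>i<n. \<Sum>k<n. \<Sum>j<n. V $$ (i,k) * W i j * V $$ (j,k))" by (rule sum.swap)
  also have "\<dots> = (\<Sum>i<n. \<Sum>j<n. \<Sum>k<n. V $$ (i,k) * W i j * V $$ (j,k))"
    by (rule sum.cong[OF refl], rule sum.swap)
  also have "\<dots> = (\<Sum>i<n. \<Sum>j<n. W i j * (V * transpose_mat V) $$ (i,j))"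
  proof (intro sum.cong refl)
    fix i j assume "i \<in> {..<n}" "j \<in> {..<n}"
    hence ij: "i < n" "j < n" by auto
    show "(\<Sum>k<n. V $$ (i,k) * W i j * V $$ (j,k)) = W i j * (V * transpose_mat V) $$ (i,j)"
      using mult_entry[OF V Vt ij] V ij by (simp add: sum_distrib_left mult_ac)
  qed
  also have "\<dots> = (\<Sum>i<n. W i i)" unfolding VV'
    by (rule sum.cong[OF refl], simp add: if_distrib[of "\<lambda>x. _ * x"] cong: if_cong)
  finally show ?thesis .
qed

lemma opnorm_bdd:
  assumes fin: "finite T"
  shows "bdd_above {sqrt (\<Sum>i\<in>T. (\<Sum>j\<in>T. M i j * x j)\<^sup>2) | x. (\<Sum>j\<in>T. (x j)\<^sup>2) \<le> 1}"
proof (rule bdd_aboveI)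
  fix e assume "e \<in> {sqrt (\<Sum>i\<in>T. (\<Sum>j\<in>T. M i j * x j)\<^sup>2) | x. (\<Sum>j\<in>T. (x j)\<^sup>2) \<le> 1}"
  then obtain x where e: "e = sqrt (\<Sum>i\<in>T. (\<Sum>j\<in>T. M i j * x j)\<^sup>2)" and x: "(\<Sum>j\<in>T. (x j)\<^sup>2) \<le> 1" by auto
  have xj: "\<bar>x j\<bar> \<le> 1" if "j \<in> T" for j
  proof -
    have "(x j)^2 \<le> (\<Sum>j\<in>T. (x j)\<^sup>2)" using that fin by (intro member_le_sum, auto)
    hence "(x j)^2 \<le> 1" using x by simp
    thus ?thesis by (simp add: abs_square_le_1)
  qed
  have "\<bar>\<Sum>j\<in>T. M i j * x j\<bar> \<le> (\<Sum>j\<in>T. \<bar>M i j\<bar>)" for i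
  proof -
    have "\<bar>\<Sum>j\<in>T. M i j * x j\<bar> \<le> (\<Sum>j\<in>T. \<bar>M i j * x j\<bar>)" by (rule sum_abs)
    also have "\<dots> \<le> (\<Sum>j\<in>T. \<bar>M i j\<bar>)"
      by (rule sum_mono, simp add: abs_mult, insert xj, auto intro: mult_left_le)
    finally show ?thesis .
  qed
  hence "(\<Sum>j\<in>T. M i j * x j)\<^sup>2 \<le> (\<Sum>j\<in>T. \<bar>M i j\<bar>)\<^sup>2" for i
    by (metis abs_le_square_iff abs_of_nonneg abs_ge_zero order_trans sum_abs_ge_zero)
  hence "(\<Sum>i\<in>T. (\<Sum>j\<in>T. M i j * x j)\<^sup>2) \<le> (\<Sum>i\<in>T. (\<Sum>j\<in>T. \<bar>M i j\<bar>)\<^sup>2)"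
    by (intro sum_mono)
  thus "e \<le> sqrt (\<Sum>i\<in>T. (\<Sum>j\<in>T. \<bar>M i j\<bar>)\<^sup>2)" unfolding e by simp
qed

lemma opnorm_ge:
  assumes fin: "finite T" and x: "(\<Sum>j\<in>T. (x j)\<^sup>2) \<le> 1"
  shows "sqrt (\<Sum>i\<in>T. (\<Sum>j\<in>T. M i j * x j)\<^sup>2) \<le> opnorm_on T M"
  unfolding opnorm_on_def by (rule cSup_upper, use x in blast, rule opnorm_bdd[OF fin])

lemma opnorm_diag:
  assumes fin: "finite T" and i: "i \<in> T"
  shows "\<bar>M i i\<bar> \<le> opnorm_on T M"
proof -
  define x where "x = (\<lambda>j. if j = i then 1 else (0::real))"
  have "(\<Sum>j\<in>T. (x j)\<^sup>2) = 1" using fin i by (simp add: x_def if_distrib[of "\<lambda>x. x^2"] cong: if_cong)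
  hence le: "sqrt (\<Sum>i'\<in>T. (\<Sum>j\<in>T. M i' j * x j)\<^sup>2) \<le> opnorm_on T M" by (intro opnorm_ge[OF fin], simp)
  have inner: "(\<Sum>j\<in>T. M i' j * x j) = M i' i" for i'
    using fin i by (simp add: x_def if_distrib[of "\<lambda>x. _ * x"] cong: if_cong)
  have "(M i i)^2 \<le> (\<Sum>i'\<in>T. (M i' i)\<^sup>2)" using fin i by (intro member_le_sum, auto)
  hence "\<bar>M i i\<bar> \<le> sqrt (\<Sum>i'\<in>T. (M i' i)\<^sup>2)" by (simp add: real_le_rsqrt)
  thus ?thesis using le unfolding inner by simp
qed

lemma opnorm_qf:
  assumes fin: "finite T" and op: "opnorm_on T M \<le> lam"
  shows "\<bar>\<Sum>i\<in>T. \<Sum>j\<in>T. x i * M i j * x j\<bar> \<le> lam * (\<Sum>i\<in>T. (x i)^2)"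
proof -
  define s where "s = (\<Sum>j\<in>T. (x j)^2)"
  define Mx where "Mx = (\<lambda>i. \<Sum>j\<in>T. M i j * x j)"
  have s0: "s \<ge> 0" unfolding s_def by (auto intro: sum_nonneg)
  have lhs: "(\<Sum>i\<in>T. \<Sum>j\<in>T. x i * M i j * x j) = (\<Sum>i\<in>T. x i * Mx i)"
    unfolding Mx_def by (simp add: sum_distrib_left mult_ac)
  show ?thesis
  proof (cases "s = 0")
    case True
    hence "\<forall>j\<in>T. x j = 0" using fin unfolding s_def by (simp add: sum_nonneg_eq_0_iff)
    thus ?thesis using True unfolding lhs s_def by simp
  next
    case False
    hence sp: "s > 0" using s0 by simp
    define y where "y = (\<lambda>j. x j / sqrt s)"
    have "(\<Sum>j\<in>T. (y j)^2) = 1" unfolding y_def using sp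
      by (simp add: power_divide sum_divide_distrib[symmetric] s_def[symmetric])
    hence "sqrt (\<Sum>i\<in>T. (\<Sum>j\<in>T. M i j * y j)\<^sup>2) \<le> lam"
      using opnorm_ge[OF fin, of y M] op by simp
    moreover have "(\<Sum>j\<in>T. M i j * y j) = Mx i / sqrt s" for i
      unfolding y_def Mx_def by (simp add: sum_divide_distrib)
    ultimately have "sqrt (\<Sum>i\<in>T. (Mx i / sqrt s)\<^sup>2) \<le> lam" by simp
    also have "(\<Sum>i\<in>T. (Mx i / sqrt s)\<^sup>2) = (\<Sum>i\<in>T. (Mx i)\<^sup>2) / s"
      using sp by (simp add: power_divide sum_divide_distrib)
    finally have "sqrt ((\<Sum>i\<in>T. (Mx i)\<^sup>2) / s) \<le> lam" .
    hence h2: "sqrt (\<Sum>i\<in>T. (Mx i)\<^sup>2) \<le> lam * sqrt s" using sp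
      by (simp add: real_sqrt_divide divide_le_eq)
    have h3: "sqrt s * sqrt (\<Sum>i\<in>T. (Mx i)\<^sup>2) \<le> sqrt s * (lam * sqrt s)"
      by (rule mult_left_mono[OF h2], simp add: s0)
    have "\<bar>\<Sum>i\<in>T. x i * Mx i\<bar> \<le> sqrt s * sqrt (\<Sum>i\<in>T. (Mx i)\<^sup>2)"
    proof -
      have "(\<Sum>i\<in>T. x i * Mx i)\<^sup>2 \<le> s * (\<Sum>i\<in>T. (Mx i)\<^sup>2)"
        unfolding s_def by (rule Cauchy_Schwarz_ineq_sum)
      hence "sqrt ((\<Sum>i\<in>T. x i * Mx i)\<^sup>2) \<le> sqrt (s * (\<Sum>i\<in>T. (Mx i)\<^sup>2))"
        by (rule real_sqrt_le_mono)
      thus ?thesis by (simp add: real_sqrt_mult)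
    qed
    hence "\<bar>\<Sum>i\<in>T. x i * Mx i\<bar> \<le> sqrt s * (lam * sqrt s)"
      using h3 by linarith
    also have "\<dots> = lam * s" using s0 by (simp add: mult_ac)
    finally show ?thesis unfolding lhs s_def .
  qed
qed

lemma qf_support:
  assumes T: "T \<subseteq> {..<n}" and x: "\<And>i. i \<notin> T \<Longrightarrow> x i = 0"
  shows "qf n M x x = (\<Sum>i\<in>T. \<Sum>j\<in>T. x i * M i j * x j)"
    and "(\<Sum>i<n. (x i)^2) = (\<Sum>i\<in>T. (x i)^2)"
proof -
  have fin: "finite T" using T finite_subset by blast
  have "qf n M x x = (\<Sum>i\<in>T. \<Sum>j<n. x i * M i j * x j)" unfolding qf_def
    by (rule sum.mono_neutral_right, insert T x, auto)
  also have "\<dots> = (\<Sum>i\<in>T. \<Sum>j\<in>T. x i * M i j * x j)"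
    by (rule sum.cong[OF refl], rule sum.mono_neutral_right, insert T x, auto)
  finally show "qf n M x x = (\<Sum>i\<in>T. \<Sum>j\<in>T. x i * M i j * x j)" .
  show "(\<Sum>i<n. (x i)^2) = (\<Sum>i\<in>T. (x i)^2)"
    by (rule sum.mono_neutral_right, insert T x, auto)
qed

lemma opnorm_qf_n:
  assumes T: "T \<subseteq> {..<n}" and op: "opnorm_on T M \<le> lam"
    and x: "\<And>i. i \<notin> T \<Longrightarrow> x i = 0"
  shows "\<bar>qf n M x x\<bar> \<le> lam * (\<Sum>i<n. (x i)^2)"
proof -
  have fin: "finite T" using T finite_subset by blast
  show ?thesis using opnorm_qf[OF fin op, of x] qf_support(1)[OF T x, where M=M] qf_support(2)[OF T x] by simp
qed

lemma qf_diag_add: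
  "(\<Sum>i<n. \<Sum>j<n. x i * (X i j + (if i = j then c else 0)) * x j) = qf n X x x + c * (\<Sum>i<n. (x i)^2)"
proof -
  have "(\<Sum>i<n. \<Sum>j<n. x i * (X i j + (if i = j then c else 0)) * x j)
      = (\<Sum>i<n. (\<Sum>j<n. x i * X i j * x j) + (\<Sum>j<n. if i = j then c * (x i)^2 else 0))"
  proof (rule sum.cong[OF refl])
    fix i assume "i \<in> {..<n}"
    show "(\<Sum>j<n. x i * (X i j + (if i = j then c else 0)) * x j)
      = (\<Sum>j<n. x i * X i j * x j) + (\<Sum>j<n. if i = j then c * (x i)^2 else 0)"
      unfolding sum.distrib[symmetric] by (rule sum.cong[OF refl], auto simp: algebra_simps power2_eq_square)
  qed
  also have "\<dots> = qf n X x x + c * (\<Sum>i<n. (x i)^2)"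
    by (simp add: qf_def sum.distrib sum_distrib_left)
  finally show ?thesis .
qed

lemma qf_diag_sub:
  "(\<Sum>i<n. \<Sum>j<n. x i * ((if i = j then c else 0) - X i j) * x j) = c * (\<Sum>i<n. (x i)^2) - qf n X x x"
proof -
  have "(\<Sum>i<n. \<Sum>j<n. x i * ((if i = j then c else 0) - X i j) * x j)
      = (\<Sum>i<n. (\<Sum>j<n. if i = j then c * (x i)^2 else 0) - (\<Sum>j<n. x i * X i j * x j))"
  proof (rule sum.cong[OF refl])
    fix i assume "i \<in> {..<n}"
    show "(\<Sum>j<n. x i * ((if i = j then c else 0) - X i j) * x j)
      = (\<Sum>j<n. if i = j then c * (x i)^2 else 0) - (\<Sum>j<n. x i * X i j * x j)"
      unfolding sum_subtractf[symmetric] by (rule sum.cong[OF refl], auto simp: algebra_simps power2_eq_square)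
  qed
  also have "\<dots> = c * (\<Sum>i<n. (x i)^2) - qf n X x x"
    by (simp add: qf_def sum_subtractf sum_distrib_left)
  finally show ?thesis .
qed

lemma qf_blocks:
  "qf n (\<lambda>i j. (\<Sum>l<k. ind l i * ind l j) * M i j) x y
     = (\<Sum>l<k. qf n M (\<lambda>i. ind l i * x i) (\<lambda>i. ind l i * y i))"
proof -
  have "qf n (\<lambda>i j. (\<Sum>l<k. ind l i * ind l j) * M i j) x y
      = (\<Sum>i<n. \<Sum>j<n. \<Sum>l<k. (ind l i * x i) * M i j * (ind l j * y j))"
    unfolding qf_def by (intro sum.cong refl, simp add: sum_distrib_left sum_distrib_right mult_ac)
  also have "\<dots> = (\<Sum>i<n. \<Sum>l<k. \<Sum>j<n. (ind l i * x i) * M i j * (ind l j * y j))"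
    by (rule sum.cong[OF refl], rule sum.swap)
  also have "\<dots> = (\<Sum>l<k. \<Sum>i<n. \<Sum>j<n. (ind l i * x i) * M i j * (ind l j * y j))"
    by (rule sum.swap)
  finally show ?thesis unfolding qf_def .
qed

lemma qf_linear_left: "qf n (\<lambda>i j. M i j - N i j) x y = qf n M x y - qf n N x y"
  unfolding qf_def by (simp add: sum_subtractf[symmetric] algebra_simps)

lemma pair_sum:
  fixes n :: nat
  shows "(\<Sum>(i, j) \<in> {(i, j). i < n \<and> j < n \<and> P i j}. W i j) = (\<Sum>i<n. \<Sum>j<n. if P i j then W i j else (0::real))"
proof -
  have "(\<Sum>(i, j) \<in> {(i, j). i < n \<and> j < n \<and> P i j}. W i j)
       = (\<Sum>(i, j) \<in> {..<n} \<times> {..<n}. if P i j then W i j else 0)"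
    by (rule sum.mono_neutral_cong_left, auto split: if_splits intro: finite_cartesian_product)
  also have "\<dots> = (\<Sum>i<n. \<Sum>j<n. if P i j then W i j else 0)"
    by (simp add: sum.cartesian_product)
  finally show ?thesis .
qed

locale detx =
  fixes n k :: nat and S :: "nat \<Rightarrow> nat set" and a b eps chi :: real
    and A0 A A1 :: "nat \<Rightarrow> nat \<Rightarrow> real" and B T :: "nat set"
  assumes part: "is_partition n k S"
    and b0: "0 \<le> b" and ab: "b < a"
    and chi: "1 / sqrt 2 \<le> chi"
    and A0_01: "\<And>i j. A0 i j = 0 \<or> A0 i j = 1"
    and A0_sym: "\<And>i j. A0 i j = A0 j i"
    and A0_diag: "\<And>i. A0 i i = 0"
    and adjA1: "adjacency n A1"
    and mono1: "\<And>i j. i<n \<Longrightarrow> j<n \<Longrightarrow> same_comm k S i j \<Longrightarrow> A0 i j \<le> A1 i j"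
    and mono2: "\<And>i j. i<n \<Longrightarrow> j<n \<Longrightarrow> \<not> same_comm k S i j \<Longrightarrow> A1 i j \<le> A0 i j"
    and Bn: "B \<subseteq> {..<n}" and cardB: "real (card B) \<le> eps * real n"
    and AA1: "\<And>i j. i<n \<Longrightarrow> j<n \<Longrightarrow> i \<notin> B \<Longrightarrow> j \<notin> B \<Longrightarrow> A i j = A1 i j"
    and T: "T \<subseteq> {..<n}"
    and cardT: "(1 - exp (-2 * (sqrt a - sqrt b)\<^sup>2)) * real n \<le> real (card T)"
    and opT: "opnorm_on T (\<lambda>i j. A0 i j - (a + b) / (2 * real n)
                 - (a - b) / (2 * real n) * (if same_comm k S i j then 1 else -1)) \<le> chi * sqrt (a + b)"
begin

definition "M = (\<lambda>i j. A0 i j - (a + b) / (2 * real n) - (a - b) / (2 * real n) * (if same_comm k S i j then 1 else -1))"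
definition "lam = chi * sqrt (a + b)"
definition "T' = T - B"
definition "tt i = (if i \<in> T' then 1 else (0::real))"
definition "indR R l i = (if i \<in> S l \<and> i \<in> R then 1 else (0::real))"
definition "ind = indR T'"

lemma chi_pos: "chi > 0"
proof -
  have "1 / sqrt 2 > (0::real)" by simp
  thus ?thesis using chi by linarith
qed

lemma lam_nonneg: "lam \<ge> 0" unfolding lam_def using chi_pos b0 ab by simp

lemma T'_sub: "T' \<subseteq> T" "T' \<subseteq> {..<n}" using T by (auto simp: T'_def)

lemma partU: "(\<Union>l<k. S l) = {..<n}" using part by (simp add: is_partition_def)

lemma uniq: assumes "i \<in> S l" "i \<in> S l'" "l < k" "l' < k" shows "l = l'"
proof (rule ccontr)
  assume "l \<noteq> l'"
  hence "S l \<inter> S l' = {}" using part assms(3,4) by (simp add: is_partition_def)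
  thus False using assms(1,2) by auto
qed

lemma S_sub: assumes "l < k" shows "S l \<subseteq> {..<n}"
proof -
  have "S l \<subseteq> (\<Union>l<k. S l)" using assms by auto
  thus ?thesis unfolding partU .
qed

lemma cover: assumes "i < n" shows "\<exists>l<k. i \<in> S l"
proof -
  have "i \<in> (\<Union>l<k. S l)" unfolding partU using assms by simp
  thus ?thesis by auto
qed

lemma same_refl: "i < n \<Longrightarrow> same_comm k S i i"
  using cover unfolding same_comm_def by auto

lemma same_sym: "same_comm k S i j = same_comm k S j i"
  unfolding same_comm_def by auto

lemma K: "(\<Sum>l<k. indR R l i * indR R l j) = (if i \<in> R \<and> j \<in> R \<and> same_comm k S i j then 1 else 0)"
proof (cases "i \<in> R \<and> j \<in> R \<and> same_comm k S i j")
  case True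
  then obtain l where l: "l < k" "i \<in> S l" "j \<in> S l" and R: "i \<in> R" "j \<in> R"
    unfolding same_comm_def by blast
  have "(\<Sum>l'<k. indR R l' i * indR R l' j) = (\<Sum>l'<k. if l' = l then 1 else 0)"
  proof (rule sum.cong[OF refl])
    fix l' assume "l' \<in> {..<k}"
    hence l': "l' < k" by simp
    show "indR R l' i * indR R l' j = (if l' = l then 1 else 0)"
    proof (cases "l' = l")
      case True thus ?thesis using l R by (simp add: indR_def)
    next
      case False
      have "i \<notin> S l'"
      proof
        assume "i \<in> S l'"
        from uniq[OF this l(2) l' l(1)] False show False by simp
      qed
      thus ?thesis using False by (simp add: indR_def)
    qed
  qed
  also have "\<dots> = 1" using l by simp
  finally show ?thesis using True by simp
next
  case False
  have "indR R l' i * indR R l' j = 0" if l': "l' < k" for l'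
  proof (cases "i \<in> S l' \<and> i \<in> R \<and> j \<in> S l' \<and> j \<in> R")
    case True
    hence "same_comm k S i j" unfolding same_comm_def using l' by blast
    thus ?thesis using False True by simp
  next
    case False thus ?thesis unfolding indR_def by simp
  qed
  hence "(\<Sum>l'<k. indR R l' i * indR R l' j) = 0" by (meson lessThan_iff sum.neutral)
  thus ?thesis using False by simp
qed

lemma K1: "(\<Sum>l<k. ind l i * ind l j) = (if i \<in> T' \<and> j \<in> T' \<and> same_comm k S i j then 1 else 0)"
  unfolding ind_def by (rule K)

lemma ind01: "ind l i * ind l i = ind l i" "ind l i \<ge> 0"
  by (auto simp: ind_def indR_def)

lemma ind_sum_le: "(\<Sum>l<k. ind l i) \<le> 1"
  using K1[of i i] by (simp add: ind01)

lemma Msym: "M i j = M j i"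
  unfolding M_def using A0_sym[of i j] same_sym[of i j] by simp

lemma qbound:
  assumes "\<And>i. i \<notin> T \<Longrightarrow> x i = 0"
  shows "\<bar>qf n M x x\<bar> \<le> lam * (\<Sum>i<n. (x i)^2)"
  unfolding lam_def by (rule opnorm_qf_n[OF T _ assms], use opT in \<open>simp add: M_def\<close>)

lemma block_bound:
  "\<bar>qf n (\<lambda>i j. (\<Sum>l<k. ind l i * ind l j) * M i j) x x\<bar> \<le> lam * (\<Sum>i<n. (x i)^2)"
proof -
  have "\<bar>qf n (\<lambda>i j. (\<Sum>l<k. ind l i * ind l j) * M i j) x x\<bar>
      = \<bar>\<Sum>l<k. qf n M (\<lambda>i. ind l i * x i) (\<lambda>i. ind l i * x i)\<bar>" by (simp add: qf_blocks)
  also have "\<dots> \<le> (\<Sum>l<k. \<bar>qf n M (\<lambda>i. ind l i * x i) (\<lambda>i. ind l i * x i)\<bar>)" by (rule sum_abs)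
  also have "\<dots> \<le> (\<Sum>l<k. lam * (\<Sum>i<n. (ind l i * x i)^2))"
  proof (rule sum_mono)
    fix l assume "l \<in> {..<k}"
    show "\<bar>qf n M (\<lambda>i. ind l i * x i) (\<lambda>i. ind l i * x i)\<bar> \<le> lam * (\<Sum>i<n. (ind l i * x i)^2)"
      by (rule qbound, use T'_sub in \<open>auto simp: ind_def indR_def\<close>)
  qed
  also have "\<dots> = lam * (\<Sum>l<k. \<Sum>i<n. (ind l i * x i)^2)" by (simp add: sum_distrib_left)
  also have "(\<Sum>l<k. \<Sum>i<n. (ind l i * x i)^2) = (\<Sum>i<n. \<Sum>l<k. (ind l i * x i)^2)"
    by (rule sum.swap)
  also have "(\<Sum>i<n. \<Sum>l<k. (ind l i * x i)^2) = (\<Sum>i<n. (x i)^2 * (\<Sum>l<k. ind l i))"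
    unfolding sum_distrib_left
    by (intro sum.cong refl, simp add: power_mult_distrib power2_eq_square ind01 mult_ac)
  also have "lam * (\<Sum>i<n. (x i)^2 * (\<Sum>l<k. ind l i)) \<le> lam * (\<Sum>i<n. (x i)^2)"
    by (rule mult_left_mono[OF _ lam_nonneg], rule sum_mono, rule mult_left_le[OF ind_sum_le], simp)
  finally show ?thesis .
qed

end

lemma qf_cong: "(\<And>i j. i<n \<Longrightarrow> j<n \<Longrightarrow> M i j = N i j) \<Longrightarrow> qf n M x y = qf n N x y"
  unfolding qf_def by (intro sum.cong refl, auto)

lemma qf_ones: "qf n (\<lambda>i j. 1) y y = (\<Sum>i<n. y i)^2"
  unfolding qf_def power2_eq_square by (simp add: sum_distrib_left sum_distrib_right mult_ac)

context detx
begin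

definition "Wst i j = (\<Sum>l<k. ind l i * ind l j)"
definition "Fst i j = Wst i j * (A1 i j - A0 i j)"

lemma Wst_eq: "Wst i j = (if i \<in> T' \<and> j \<in> T' \<and> same_comm k S i j then 1 else 0)"
  unfolding Wst_def by (rule K1)

lemma Wst_sym: "Wst i j = Wst j i"
  unfolding Wst_def by (simp add: mult.commute)

lemma n_pos_of: "i < n \<Longrightarrow> real n > 0" by simp

lemma Wst_M:
  assumes i: "i < n" and j: "j < n"
  shows "(A i j - a / real n - Fst i j) * Wst i j = M i j * Wst i j"
proof (cases "i \<in> T' \<and> j \<in> T' \<and> same_comm k S i j")
  case True
  hence W1: "Wst i j = 1" by (simp add: Wst_eq)
  have "i \<notin> B" "j \<notin> B" using True by (auto simp: T'_def)
  hence AA: "A i j = A1 i j" using AA1 i j by simp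
  have n0: "real n > 0" using i by simp
  have "M i j = A0 i j - a / real n" unfolding M_def using True n0
    by (simp add: field_simps)
  thus ?thesis using W1 AA by (simp add: Fst_def)
next
  case False hence "Wst i j = 0" by (simp add: Wst_eq)
  thus ?thesis by simp
qed

lemma feasible_star: "sdp_feasible n A a b chi Wst Fst"
proof -
  have bnd: "0 \<le> Wst i j \<and> Wst i j \<le> 1 \<and> 0 \<le> Fst i j \<and> Fst i j \<le> 1" if i: "i<n" and j: "j<n" for i j
  proof (cases "i \<in> T' \<and> j \<in> T' \<and> same_comm k S i j")
    case True
    hence W1: "Wst i j = 1" by (simp add: Wst_eq)
    have le: "A0 i j \<le> A1 i j" using mono1[OF i j] True by simp
    have "A1 i j = 0 \<or> A1 i j = 1" using adjA1 unfolding adjacency_def by auto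
    thus ?thesis using A0_01[of i j] le W1 by (auto simp: Fst_def)
  next
    case False hence "Wst i j = 0" by (simp add: Wst_eq)
    thus ?thesis by (simp add: Fst_def)
  qed
  have psdW: "qf n Wst x x \<ge> 0" for x
  proof -
    have "qf n Wst x x = qf n (\<lambda>i j. (\<Sum>l<k. ind l i * ind l j) * 1) x x" by (simp add: Wst_def[abs_def])
    also have "\<dots> = (\<Sum>l<k. (\<Sum>i<n. ind l i * x i)^2)" unfolding qf_blocks qf_ones ..
    finally show ?thesis by (simp add: sum_nonneg)
  qed
  have "trace_norm n Wst = (\<Sum>i<n. Wst i i)"
    by (rule trace_norm_psd, rule Wst_sym, rule psdW)
  also have "\<dots> \<le> (\<Sum>i<n. 1)" by (rule sum_mono, simp add: Wst_eq)
  finally have tn: "trace_norm n Wst \<le> real n" by simp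
  let ?X = "\<lambda>i j. (A i j - a / real n - Fst i j) * Wst i j"
  have qX: "qf n ?X x x = qf n (\<lambda>i j. (\<Sum>l<k. ind l i * ind l j) * M i j) x x" for x
    by (rule qf_cong, simp add: Wst_M, simp add: Wst_def mult.commute)
  have symX: "?X i j = ?X j i" if "i < n" "j < n" for i j
  proof -
    have "?X i j = M i j * Wst i j" by (rule Wst_M[OF that])
    also have "\<dots> = M j i * Wst j i" using Msym[of i j] Wst_sym[of i j] by simp
    also have "\<dots> = ?X j i" by (rule Wst_M[OF that(2,1), symmetric])
    finally show ?thesis .
  qed
  have p1: "psd n (\<lambda>i j. ?X i j + (if i = j then chi * sqrt (a + b) else 0))"
    unfolding psd_def
  proof (intro conjI allI impI)
    fix i j assume "i < n" "j < n"
    thus "?X i j + (if i = j then chi * sqrt (a + b) else 0) = ?X j i + (if j = i then chi * sqrt (a + b) else 0)"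
      using symX by auto
  next
    fix x :: "nat \<Rightarrow> real"
    have "\<bar>qf n ?X x x\<bar> \<le> lam * (\<Sum>i<n. (x i)^2)" unfolding qX by (rule block_bound)
    thus "0 \<le> (\<Sum>i<n. \<Sum>j<n. x i * (?X i j + (if i = j then chi * sqrt (a + b) else 0)) * x j)"
      unfolding qf_diag_add lam_def by linarith
  qed
  have p2: "psd n (\<lambda>i j. (if i = j then chi * sqrt (a + b) else 0) - ?X i j)"
    unfolding psd_def
  proof (intro conjI allI impI)
    fix i j assume "i < n" "j < n"
    thus "(if i = j then chi * sqrt (a + b) else 0) - ?X i j = (if j = i then chi * sqrt (a + b) else 0) - ?X j i"
      using symX by auto
  next
    fix x :: "nat \<Rightarrow> real"
    have "\<bar>qf n ?X x x\<bar> \<le> lam * (\<Sum>i<n. (x i)^2)" unfolding qX by (rule block_bound)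
    thus "0 \<le> (\<Sum>i<n. \<Sum>j<n. x i * ((if i = j then chi * sqrt (a + b) else 0) - ?X i j) * x j)"
      unfolding qf_diag_sub lam_def by linarith
  qed
  show ?thesis unfolding sdp_feasible_def Let_def using bnd tn p1 p2 by blast
qed

end

context detx
begin

definition "dg i j = tt i * tt j - Wst i j"

lemma dg_eq: "dg i j = (if i \<in> T' \<and> j \<in> T' \<and> \<not> same_comm k S i j then 1 else 0)"
  unfolding dg_def Wst_eq tt_def by auto

lemma tt_sq_sum: "(\<Sum>i<n. (tt i)^2) \<le> real n"
proof -
  have "(\<Sum>i<n. (tt i)^2) \<le> (\<Sum>i<n. 1)" by (rule sum_mono, simp add: tt_def)
  thus ?thesis by simp
qed

lemma qf_tt: "qf n (\<lambda>i j. tt i * tt j * N i j) x x = qf n N (\<lambda>i. tt i * x i) (\<lambda>i. tt i * x i)"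
  unfolding qf_def by (intro sum.cong refl, simp add: mult_ac)

lemma feasible_bound:
  assumes feas: "sdp_feasible n A a b chi W F"
  shows "(a - b) / real n * (\<Sum>i<n. \<Sum>j<n. dg i j * W i j) \<le> 4 * lam * real n"
proof -
  let ?X = "\<lambda>i j. (A i j - a / real n - F i j) * W i j"
  have bnds: "\<And>i j. i<n \<Longrightarrow> j<n \<Longrightarrow> 0 \<le> W i j \<and> W i j \<le> 1 \<and> 0 \<le> F i j \<and> F i j \<le> 1"
    and tn: "trace_norm n W \<le> real n"
    and p1: "psd n (\<lambda>i j. ?X i j + (if i = j then lam else 0))"
    and p2: "psd n (\<lambda>i j. (if i = j then lam else 0) - ?X i j)"
    using feas unfolding sdp_feasible_def Let_def lam_def by auto
  have lo: "qf n ?X x x \<ge> - lam * (\<Sum>i<n. (x i)^2)" for x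
  proof -
    have "0 \<le> qf n ?X x x + lam * (\<Sum>i<n. (x i)^2)"
      using p1 unfolding psd_def qf_diag_add by blast
    thus ?thesis by linarith
  qed
  have hi: "qf n ?X x x \<le> lam * (\<Sum>i<n. (x i)^2)" for x
  proof -
    have "0 \<le> lam * (\<Sum>i<n. (x i)^2) - qf n ?X x x"
      using p2 unfolding psd_def qf_diag_sub by blast
    thus ?thesis by linarith
  qed
  have lamn: "lam * (\<Sum>i<n. (tt i)^2) \<le> lam * real n"
    by (rule mult_left_mono[OF tt_sq_sum lam_nonneg])
  have a1: "qf n ?X tt tt \<ge> - lam * real n" using lo[of tt] lamn by linarith
  have b1: "qf n (\<lambda>i j. Wst i j * ?X i j) (\<lambda>_. 1) (\<lambda>_. 1) \<le> lam * real n"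
  proof -
    have "qf n (\<lambda>i j. Wst i j * ?X i j) (\<lambda>_. 1) (\<lambda>_. 1)
        = (\<Sum>l<k. qf n ?X (\<lambda>i. ind l i * 1) (\<lambda>i. ind l i * 1))"
      unfolding Wst_def by (rule qf_blocks)
    also have "\<dots> \<le> (\<Sum>l<k. lam * (\<Sum>i<n. ind l i))"
    proof (rule sum_mono)
      fix l assume "l \<in> {..<k}"
      have "(\<Sum>i<n. (ind l i * 1)^2) = (\<Sum>i<n. ind l i)"
        by (intro sum.cong refl, simp add: power2_eq_square ind01)
      thus "qf n ?X (\<lambda>i. ind l i * 1) (\<lambda>i. ind l i * 1) \<le> lam * (\<Sum>i<n. ind l i)"
        using hi[of "\<lambda>i. ind l i * 1"] by simp
    qed
    also have "\<dots> = lam * (\<Sum>i<n. \<Sum>l<k. ind l i)"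
      by (simp add: sum_distrib_left[symmetric] sum.swap[of _ "{..<k}"])
    also have "(\<Sum>i<n. \<Sum>l<k. ind l i) \<le> (\<Sum>i<n. 1)"
      by (rule sum_mono, rule ind_sum_le)
    hence "lam * (\<Sum>i<n. \<Sum>l<k. ind l i) \<le> lam * real n"
      using mult_left_mono[OF _ lam_nonneg] by simp
    finally show ?thesis .
  qed
  have c1: "(\<Sum>i<n. \<Sum>j<n. dg i j * ?X i j) \<ge> - 2 * lam * real n"
  proof -
    have "(\<Sum>i<n. \<Sum>j<n. dg i j * ?X i j) = qf n ?X tt tt - qf n (\<lambda>i j. Wst i j * ?X i j) (\<lambda>_. 1) (\<lambda>_. 1)"
      unfolding qf_def dg_def
      by (simp add: sum_subtractf[symmetric] algebra_simps)
    thus ?thesis using a1 b1 by linarith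
  qed
  have d1: "dg i j * ?X i j \<le> dg i j * (M i j - (a - b) / real n) * W i j" if i: "i<n" and j: "j<n" for i j
  proof (cases "i \<in> T' \<and> j \<in> T' \<and> \<not> same_comm k S i j")
    case True
    hence dg1: "dg i j = 1" by (simp add: dg_eq)
    have "i \<notin> B" "j \<notin> B" using True by (auto simp: T'_def)
    hence AA: "A i j = A1 i j" using AA1 i j by simp
    have le: "A1 i j \<le> A0 i j" using mono2[OF i j] True by simp
    have n0: "real n > 0" using i by simp
    have Mv: "M i j - (a - b) / real n = A0 i j - a / real n" unfolding M_def using True n0
      by (simp add: field_simps)
    have "A i j - a / real n - F i j \<le> A0 i j - a / real n" using AA le bnds[OF i j] by simp
    hence "?X i j \<le> (A0 i j - a / real n) * W i j" using bnds[OF i j] by (simp add: mult_right_mono)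
    thus ?thesis using dg1 Mv by simp
  next
    case False hence "dg i j = 0" by (simp add: dg_eq)
    thus ?thesis by simp
  qed
  have e1: "(\<Sum>i<n. \<Sum>j<n. (dg i j * M i j) * W i j) \<le> 2 * lam * real n"
  proof -
    have symN: "dg i j * M i j = dg j i * M j i" for i j
      unfolding dg_eq using Msym[of i j] same_sym[of i j] by auto
    have qbN: "\<bar>qf n (\<lambda>i j. dg i j * M i j) x x\<bar> \<le> (2 * lam) * (\<Sum>i<n. (x i)^2)" for x
    proof -
      have "qf n (\<lambda>i j. dg i j * M i j) x x
          = qf n M (\<lambda>i. tt i * x i) (\<lambda>i. tt i * x i) - qf n (\<lambda>i j. (\<Sum>l<k. ind l i * ind l j) * M i j) x x"
        unfolding qf_tt[symmetric] qf_linear_left[symmetric] dg_def Wst_def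
        by (rule qf_cong, simp add: algebra_simps)
      moreover have "\<bar>qf n M (\<lambda>i. tt i * x i) (\<lambda>i. tt i * x i)\<bar> \<le> lam * (\<Sum>i<n. (tt i * x i)^2)"
        by (rule qbound, use T'_sub in \<open>auto simp: tt_def\<close>)
      moreover have "(\<Sum>i<n. (tt i * x i)^2) \<le> (\<Sum>i<n. (x i)^2)"
        by (rule sum_mono, simp add: tt_def power_mult_distrib)
      moreover note block_bound[of x]
      ultimately show ?thesis
        using mult_left_mono[OF _ lam_nonneg, of "(\<Sum>i<n. (tt i * x i)^2)" "(\<Sum>i<n. (x i)^2)"] by linarith
    qed
    have "(\<Sum>i<n. \<Sum>j<n. (dg i j * M i j) * W i j) \<le> (2 * lam) * trace_norm n W"
      by (rule trace_duality[OF symN qbN], use lam_nonneg in simp)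
    also have "\<dots> \<le> (2 * lam) * real n" by (rule mult_left_mono[OF tn], use lam_nonneg in simp)
    finally show ?thesis by simp
  qed
  have "(a - b) / real n * (\<Sum>i<n. \<Sum>j<n. dg i j * W i j)
      = (\<Sum>i<n. \<Sum>j<n. (dg i j * M i j) * W i j) - (\<Sum>i<n. \<Sum>j<n. dg i j * (M i j - (a - b) / real n) * W i j)"
    by (simp add: sum_distrib_left sum_subtractf[symmetric] algebra_simps)
  also have "\<dots> \<le> (\<Sum>i<n. \<Sum>j<n. (dg i j * M i j) * W i j) - (\<Sum>i<n. \<Sum>j<n. dg i j * ?X i j)"
  proof -
    have "(\<Sum>i<n. \<Sum>j<n. dg i j * ?X i j) \<le> (\<Sum>i<n. \<Sum>j<n. dg i j * (M i j - (a - b) / real n) * W i j)"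
      by (rule sum_mono, rule sum_mono, rule d1, auto)
    thus ?thesis by linarith
  qed
  also have "\<dots> \<le> 2 * lam * real n + 2 * lam * real n" using e1 c1 by linarith
  also have "\<dots> = 4 * lam * real n" by simp
  finally show ?thesis .
qed

end

lemma AR1:
  fixes a b chi :: real
  assumes b0: "0 \<le> b" and ab: "b < a" and chi: "0 \<le> chi"
  shows "chi * sqrt (a + b) / (a - b) \<le> chi / sqrt ((sqrt a - sqrt b)\<^sup>2)"
proof -
  have sab: "sqrt b < sqrt a" using ab b0 by simp
  define s where "s = sqrt a - sqrt b"
  have s0: "s > 0" using sab by (simp add: s_def)
  have sC: "sqrt ((sqrt a - sqrt b)\<^sup>2) = s" using s0 by (simp add: s_def)
  have a0: "a \<ge> 0" using b0 ab by simp
  have amb: "a - b = s * (sqrt a + sqrt b)"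
  proof -
    have "s * (sqrt a + sqrt b) = (sqrt a)^2 - (sqrt b)^2" unfolding s_def
      by (simp add: algebra_simps power2_eq_square)
    also have "\<dots> = a - b" using a0 b0 by simp
    finally show ?thesis by simp
  qed
  have pos: "sqrt a + sqrt b > 0" using sab real_sqrt_ge_zero[OF b0] by linarith
  have "sqrt (a + b) \<le> sqrt a + sqrt b"
  proof -
    have "(sqrt a + sqrt b)^2 = (sqrt a)^2 + (sqrt b)^2 + 2 * sqrt a * sqrt b"
      by (simp add: power2_sum)
    also have "\<dots> = a + b + 2 * sqrt a * sqrt b" using a0 b0 by simp
    finally have "(sqrt a + sqrt b)^2 = a + b + 2 * sqrt a * sqrt b" .
    moreover have "0 \<le> 2 * sqrt a * sqrt b" using a0 b0 by simp
    moreover have "(sqrt (a + b))^2 = a + b" using a0 b0 by simp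
    ultimately have "(sqrt (a + b))^2 \<le> (sqrt a + sqrt b)^2" by linarith
    thus ?thesis by (rule power2_le_imp_le, use pos in simp)
  qed
  hence h: "chi * sqrt (a + b) \<le> chi * (sqrt a + sqrt b)" using chi by (rule mult_left_mono)
  have sp: "0 \<le> s * (sqrt a + sqrt b)" using s0 pos by simp
  have "chi * sqrt (a + b) / (a - b) \<le> chi * (sqrt a + sqrt b) / (s * (sqrt a + sqrt b))"
    unfolding amb by (rule divide_right_mono[OF h sp])
  also have "\<dots> = chi / s" using pos by simp
  finally show ?thesis unfolding sC .
qed

lemma AR2:
  fixes C chi :: real
  assumes chi: "1 / sqrt 2 \<le> chi" and C: "0 < C"
  shows "2 * exp (- 2 * C) \<le> chi / sqrt C"
proof -
  define s where "s = sqrt C"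
  have s0: "s > 0" using C by (simp add: s_def)
  have Cs: "C = s^2" using C by (simp add: s_def)
  have e1: "exp C \<ge> 1 + C" by (rule exp_ge_add_one_self)
  have "exp (2 * C) = (exp C)^2" by (simp add: exp_double[symmetric] power2_eq_square exp_add[symmetric])
  also have "\<dots> \<ge> (1 + C)^2" using e1 C by (simp add: power_mono)
  finally have e2: "exp (2 * C) \<ge> (1 + C)^2" .
  have r2: "sqrt 2 * sqrt 2 = (2::real)" by simp
  have key: "2 * sqrt 2 * s \<le> (1 + C)^2"
  proof -
    have "0 \<le> (sqrt 2 * s - 1)^2" by simp
    hence "2 * sqrt 2 * s \<le> 1 + 2 * s^2" using r2 by (simp add: power2_eq_square algebra_simps)
    also have "\<dots> \<le> (1 + s^2)^2"
    proof -
      have "(1 + s^2)^2 = 1 + 2 * s^2 + s^2 * s^2" by (simp add: power2_eq_square algebra_simps)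
      moreover have "0 \<le> s^2 * s^2" by simp
      ultimately show ?thesis by linarith
    qed
    finally show ?thesis unfolding Cs .
  qed
  have "2 * exp (- 2 * C) = 2 / exp (2 * C)" by (simp add: exp_minus divide_inverse)
  also have "\<dots> \<le> 2 / (2 * sqrt 2 * s)"
    using key e2 s0 by (intro divide_left_mono, auto)
  also have "\<dots> = (1 / sqrt 2) / s" by simp
  also have "\<dots> \<le> chi / s" using divide_right_mono[OF chi, of s] s0 by simp
  finally show ?thesis unfolding s_def .
qed

context detx
begin

lemma sum_tt: "(\<Sum>i<n. tt i) = real (card T')"
proof -
  have "(\<Sum>i<n. tt i) = (\<Sum>i\<in>{..<n} \<inter> T'. 1)"
    unfolding tt_def by (simp add: sum.inter_restrict[symmetric] if_distrib cong: if_cong)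
  also have "{..<n} \<inter> T' = T'" using T'_sub by auto
  finally show ?thesis by simp
qed

lemma sum_tt2: "(\<Sum>i<n. \<Sum>j<n. tt i * tt j) = (real (card T'))^2"
  unfolding sum_tt[symmetric] power2_eq_square by (simp add: sum_product)

lemma sum_same: "(\<Sum>i<n. \<Sum>j<n. if same_comm k S i j then 1 else 0) = (\<Sum>l<k. (real (card (S l)))\<^sup>2)"
proof -
  have "(\<Sum>i<n. \<Sum>j<n. if same_comm k S i j then 1 else 0) = (\<Sum>i<n. \<Sum>j<n. \<Sum>l<k. indR UNIV l i * indR UNIV l j)"
    using K[of UNIV] by simp
  also have "\<dots> = (\<Sum>i<n. \<Sum>l<k. \<Sum>j<n. indR UNIV l i * indR UNIV l j)"
    by (rule sum.cong[OF refl], rule sum.swap)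
  also have "\<dots> = (\<Sum>l<k. \<Sum>i<n. \<Sum>j<n. indR UNIV l i * indR UNIV l j)"
    by (rule sum.swap)
  also have "\<dots> = (\<Sum>l<k. (real (card (S l)))\<^sup>2)"
  proof (rule sum.cong[OF refl])
    fix l assume "l \<in> {..<k}"
    hence Sl: "S l \<subseteq> {..<n}" using S_sub by simp
    have c: "(\<Sum>i<n. indR UNIV l i) = real (card (S l))"
    proof -
      have "(\<Sum>i<n. indR UNIV l i) = (\<Sum>i\<in>{..<n} \<inter> S l. 1)"
        unfolding indR_def by (simp add: sum.inter_restrict[symmetric] if_distrib cong: if_cong)
      also have "{..<n} \<inter> S l = S l" using Sl by auto
      finally show ?thesis by simp
    qed
    show "(\<Sum>i<n. \<Sum>j<n. indR UNIV l i * indR UNIV l j) = (real (card (S l)))\<^sup>2"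
      unfolding c[symmetric] power2_eq_square by (simp add: sum_product)
  qed
  finally show ?thesis .
qed

lemma card_T'_bounds:
  "real (card T') \<le> real n"
  "(1 - exp (-2 * (sqrt a - sqrt b)\<^sup>2)) * real n - eps * real n \<le> real (card T')"
proof -
  show "real (card T') \<le> real n" using card_mono[OF _ T'_sub(2)] by simp
  have finB: "finite B" using Bn finite_subset by blast
  have "T \<subseteq> T' \<union> B" unfolding T'_def by auto
  hence "card T \<le> card (T' \<union> B)" using finB T'_sub(2) finite_subset
    by (intro card_mono, auto)
  also have "\<dots> \<le> card T' + card B" by (rule card_Un_le)
  finally have "real (card T) \<le> real (card T') + real (card B)" by linarith
  thus "(1 - exp (-2 * (sqrt a - sqrt b)\<^sup>2)) * real n - eps * real n \<le> real (card T')"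
    using cardT cardB by linarith
qed

lemma det_main:
  assumes opt: "sdp_optimal n A a b chi W F" and npos: "0 < n"
  shows "(\<Sum>(i, j) \<in> {(i, j). i < n \<and> j < n \<and> \<not> same_comm k S i j}. W i j)
            \<le> (5 * chi / sqrt ((sqrt a - sqrt b)\<^sup>2) + 2 * eps) * (real n)\<^sup>2 \<and>
         (\<Sum>(i, j) \<in> {(i, j). i < n \<and> j < n \<and> same_comm k S i j}. W i j)
            \<ge> (\<Sum>l<k. (real (card (S l)))\<^sup>2) - (6 * chi / sqrt ((sqrt a - sqrt b)\<^sup>2) + 4 * eps) * (real n)\<^sup>2"
proof -
  define C where "C = (sqrt a - sqrt b)\<^sup>2"
  define e where "e = exp (-2 * C)"
  define sC where "sC = sqrt C"
  define t where "t = real (card T')"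
  define N where "N = real n"
  have feas: "sdp_feasible n A a b chi W F" using opt unfolding sdp_optimal_def by blast
  have objle: "sdp_obj n Wst \<le> sdp_obj n W" using opt feasible_star unfolding sdp_optimal_def by blast
  have FB: "(a - b) / N * (\<Sum>i<n. \<Sum>j<n. dg i j * W i j) \<le> 4 * lam * N"
    using feasible_bound[OF feas] unfolding N_def .
  have bnds: "\<And>i j. i<n \<Longrightarrow> j<n \<Longrightarrow> 0 \<le> W i j \<and> W i j \<le> 1"
    using feas unfolding sdp_feasible_def by auto
  have Npos: "N > 0" using npos by (simp add: N_def)
  have abpos: "a - b > 0" using ab by simp
  have sab: "sqrt b < sqrt a" using ab b0 by simp
  have Cpos: "C > 0" unfolding C_def using sab by simp
  define G where "G = (\<Sum>i<n. \<Sum>j<n. dg i j * W i j)"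
  have G1: "G \<le> 4 * lam * N * N / (a - b)"
    using FB Npos abpos unfolding G_def[symmetric] by (simp add: field_simps)
  have lamC: "lam / (a - b) \<le> chi / sC"
    using AR1[OF b0 ab, of chi] chi_pos unfolding lam_def sC_def C_def by simp
  have G2: "G \<le> 4 * (chi / sC) * N^2"
  proof -
    have "4 * lam * N * N / (a - b) = 4 * (lam / (a - b)) * N^2" by (simp add: power2_eq_square)
    also have "\<dots> \<le> 4 * (chi / sC) * N^2"
    proof -
      have "4 * (lam / (a - b)) \<le> 4 * (chi / sC)" using lamC by simp
      thus ?thesis by (rule mult_right_mono, simp)
    qed
    finally show ?thesis using G1 by linarith
  qed
  have eC: "2 * e \<le> chi / sC" using AR2[OF chi Cpos] unfolding e_def sC_def .
  have tN: "t \<le> N" using card_T'_bounds(1) unfolding t_def N_def .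
  have tlo: "(1 - e) * N - eps * N \<le> t" using card_T'_bounds(2) unfolding t_def N_def e_def C_def .
  define Q where "Q = N^2 - t^2"
  have Q: "Q \<le> 2 * N^2 * (e + eps)"
  proof -
    have t0: "t \<ge> 0" unfolding t_def by simp
    have "Q = (N - t) * (N + t)" unfolding Q_def by (simp add: power2_eq_square algebra_simps)
    also have "\<dots> \<le> (N - t) * (2 * N)" using tN t0 by (intro mult_left_mono, auto)
    also have "\<dots> \<le> ((e + eps) * N) * (2 * N)" using tlo Npos
      by (intro mult_right_mono, auto simp: algebra_simps)
    finally show ?thesis by (simp add: power2_eq_square algebra_simps)
  qed
  have sumQ: "(\<Sum>i<n. \<Sum>j<n. 1 - tt i * tt j) = Q"
    unfolding Q_def N_def t_def using sum_tt2 by (simp add: sum_subtractf power2_eq_square)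
  define D where "D = (\<Sum>i<n. \<Sum>j<n. if same_comm k S i j then 0 else W i j)"
  have D1: "D \<le> G + Q"
  proof -
    have "D \<le> (\<Sum>i<n. \<Sum>j<n. dg i j * W i j + (1 - tt i * tt j))"
      unfolding D_def
    proof (intro sum_mono)
      fix i j assume "i \<in> {..<n}" "j \<in> {..<n}"
      hence b: "0 \<le> W i j \<and> W i j \<le> 1" using bnds by auto
      show "(if same_comm k S i j then 0 else W i j) \<le> dg i j * W i j + (1 - tt i * tt j)"
        using b unfolding dg_eq tt_def by auto
    qed
    also have "\<dots> = G + Q" unfolding G_def sumQ[symmetric] by (simp add: sum.distrib)
    finally show ?thesis .
  qed
  define Sm where "Sm = (\<Sum>i<n. \<Sum>j<n. if same_comm k S i j then W i j else 0)"
  have tot: "sdp_obj n W = Sm + D" unfolding sdp_obj_def Sm_def D_def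
    by (simp add: sum.distrib[symmetric], intro sum.cong refl, simp)
  have objst: "sdp_obj n Wst \<ge> (\<Sum>l<k. (real (card (S l)))\<^sup>2) - Q"
  proof -
    have "(\<Sum>i<n. \<Sum>j<n. (if same_comm k S i j then 1 else 0) - (1 - tt i * tt j)) \<le> sdp_obj n Wst"
      unfolding sdp_obj_def
    proof (intro sum_mono)
      fix i j assume "i \<in> {..<n}" "j \<in> {..<n}"
      show "(if same_comm k S i j then 1 else 0) - (1 - tt i * tt j) \<le> Wst i j"
        unfolding Wst_eq tt_def by auto
    qed
    moreover have "(\<Sum>i<n. \<Sum>j<n. (if same_comm k S i j then 1 else 0) - (1 - tt i * tt j))
        = (\<Sum>l<k. (real (card (S l)))\<^sup>2) - Q"
      unfolding sum_same[symmetric] sumQ[symmetric] by (simp add: sum_subtractf)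
    ultimately show ?thesis by linarith
  qed
  have p1: "(\<Sum>(i, j) \<in> {(i, j). i < n \<and> j < n \<and> \<not> same_comm k S i j}. W i j) = D"
    unfolding pair_sum D_def by (intro sum.cong refl, auto)
  have p2: "(\<Sum>(i, j) \<in> {(i, j). i < n \<and> j < n \<and> same_comm k S i j}. W i j) = Sm"
    unfolding pair_sum Sm_def ..
  define K where "K = (chi / sC) * N^2"
  define E where "E = e * N^2"
  define P where "P = eps * N^2"
  have G2': "G \<le> 4 * K" using G2 unfolding K_def by (simp add: algebra_simps)
  have Q': "Q \<le> 2 * E + 2 * P" using Q unfolding E_def P_def by (simp add: algebra_simps)
  have eC': "2 * E \<le> K"
  proof -
    have "2 * e * N^2 \<le> (chi / sC) * N^2" using eC by (rule mult_right_mono, simp)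
    thus ?thesis unfolding E_def K_def by (simp add: algebra_simps)
  qed
  have r1: "D \<le> (5 * (chi / sC) + 2 * eps) * N^2"
  proof -
    have "(5 * (chi / sC) + 2 * eps) * N^2 = 5 * K + 2 * P" unfolding K_def P_def by (simp add: algebra_simps)
    thus ?thesis using D1 G2' Q' eC' by linarith
  qed
  have r2: "Sm \<ge> (\<Sum>l<k. (real (card (S l)))\<^sup>2) - (6 * (chi / sC) + 4 * eps) * N^2"
  proof -
    have "(6 * (chi / sC) + 4 * eps) * N^2 = 6 * K + 4 * P" unfolding K_def P_def by (simp add: algebra_simps)
    thus ?thesis using tot objle objst D1 G2' Q' eC' by linarith
  qed
  show ?thesis using r1 r2 unfolding p1 p2 N_def sC_def C_def by (simp add: times_divide_eq_right)
qed

end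

lemma sbm_support:
  assumes "A0 \<in> set_pmf (sbm n k S a b)"
  shows "\<And>i j. A0 i j = 0 \<or> A0 i j = 1" "\<And>i j. A0 i j = A0 j i" "\<And>i. A0 i i = 0"
proof -
  define I where "I = {(i, j). i < j \<and> j < n}"
  have finI: "finite I"
  proof -
    have "I \<subseteq> {..<n} \<times> {..<n}" unfolding I_def by auto
    thus ?thesis by (rule finite_subset, simp)
  qed
  obtain e where A0e: "A0 = edge_adj e"
    and e: "e \<in> set_pmf (Pi_pmf I False (\<lambda>(i, j). bernoulli_pmf (if same_comm k S i j then a / real n else b / real n)))"
    using assms unfolding sbm_def I_def by auto
  have eI: "e x = False" if "x \<notin> I" for x
    using subsetD[OF set_Pi_pmf_subset[OF finI] e] that by (cases x, simp)
  show "\<And>i j. A0 i j = 0 \<or> A0 i j = 1" unfolding A0e edge_adj_def by auto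
  show "\<And>i j. A0 i j = A0 j i" unfolding A0e edge_adj_def by auto
  show "\<And>i. A0 i i = 0" unfolding A0e edge_adj_def using eI by (auto simp: I_def)
qed

lemma prob_zero_if_disjoint:
  assumes "E \<inter> set_pmf p = {}"
  shows "measure_pmf.prob p E = 0"
proof -
  have "measure_pmf.prob p E = measure_pmf.prob p (E \<inter> set_pmf p)" by (simp add: measure_Int_set_pmf)
  also have "\<dots> = 0" using assms by simp
  finally show ?thesis .
qed

lemma chi_lower:
  assumes "chi_property chi"
  shows "1 / sqrt 2 \<le> chi"
proof (rule ccontr)
  assume neg: "\<not> 1 / sqrt 2 \<le> chi"
  define S :: "nat \<Rightarrow> nat set" where "S = (\<lambda>_. {0, 1})"
  have part: "is_partition 2 1 S" unfolding is_partition_def S_def by auto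
  let ?L = "\<lambda>i j. if same_comm 1 S i j then 1 else -1 :: real"
  let ?E = "{A0. \<exists>T \<subseteq> {..<2}. real (card T) \<ge> (1 - exp (-2 * (sqrt 2 - sqrt 0)\<^sup>2)) * real (2::nat) \<and>
                   opnorm_on T (\<lambda>i j. A0 i j - (2 + 0) / (2 * real (2::nat))
                                    - (2 - 0) / (2 * real (2::nat)) * ?L i j) \<le> chi * sqrt (2 + 0)}"
  have P: "measure_pmf.prob (sbm 2 1 S 2 0) ?E \<ge> 1 - 2 / (real (2::nat))\<^sup>2"
    using assms part unfolding chi_property_def Let_def
    by (elim allE[of _ 2] allE[of _ 1] allE[of _ S] allE[of _ 2] allE[of _ 0], simp)
  have "?E \<inter> set_pmf (sbm 2 1 S 2 0) = {}"
  proof (rule ccontr)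
    assume "?E \<inter> set_pmf (sbm 2 1 S 2 0) \<noteq> {}"
    then obtain A0 T where A0: "A0 \<in> set_pmf (sbm 2 1 S 2 0)" and T: "T \<subseteq> {..<2}"
      and cT: "real (card T) \<ge> (1 - exp (-2 * (sqrt 2 - sqrt 0)\<^sup>2)) * real (2::nat)"
      and op: "opnorm_on T (\<lambda>i j. A0 i j - (2 + 0) / (2 * real (2::nat))
                                    - (2 - 0) / (2 * real (2::nat)) * ?L i j) \<le> chi * sqrt (2 + 0)"
      by blast
    have ex: "exp (-2 * (sqrt 2 - sqrt 0)\<^sup>2) < (1::real)" by simp
    have "(1 - exp (-2 * (sqrt 2 - sqrt 0)\<^sup>2)) * real (2::nat) > 0" using ex by simp
    hence "real (card T) > 0" using cT by linarith
    hence "T \<noteq> {}" by auto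
    then obtain i where i: "i \<in> T" by blast
    have i2: "i < 2" using i T by auto
    have finT: "finite T" using T finite_subset by blast
    have same: "same_comm 1 S i i" unfolding same_comm_def S_def using i2 by auto
    have "\<bar>A0 i i - (2 + 0) / (2 * real (2::nat)) - (2 - 0) / (2 * real (2::nat)) * ?L i i\<bar> \<le> chi * sqrt (2 + 0)"
      using opnorm_diag[OF finT i] op by (rule order_trans)
    hence "1 \<le> chi * sqrt 2" using sbm_support(3)[OF A0, of i] same by simp
    hence "1 / sqrt 2 \<le> chi" by (simp add: field_simps)
    thus False using neg by simp
  qed
  hence "measure_pmf.prob (sbm 2 1 S 2 0) ?E = 0" by (rule prob_zero_if_disjoint)
  thus False using P by simp
qed


theorem mainTheorem10:
  fixes n k :: nat and S :: "nat \<Rightarrow> nat set" and a b eps chi :: real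
  assumes "chi_property chi"
    and "is_partition n k S"
    and "0 \<le> b" and "b < a" and "a \<le> real n"
  shows "measure_pmf.prob (sbm n k S a b)
           {A0. \<forall>A. admissible n k S eps A0 A \<longrightarrow>
              (\<forall>W F. sdp_optimal n A a b chi W F \<longrightarrow>
                 (let C = (sqrt a - sqrt b)\<^sup>2 in
                  (\<Sum>(i, j) \<in> {(i, j). i < n \<and> j < n \<and> \<not> same_comm k S i j}. W i j)
                     \<le> (5 * chi / sqrt C + 2 * eps) * (real n)\<^sup>2 \<and>
                  (\<Sum>(i, j) \<in> {(i, j). i < n \<and> j < n \<and> same_comm k S i j}. W i j)
                     \<ge> (\<Sum>l<k. (real (card (S l)))\<^sup>2) - (6 * chi / sqrt C + 4 * eps) * (real n)\<^sup>2))}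
         \<ge> 1 - 2 / (real n)\<^sup>2"
proof -
  note chiP = assms(1) and part = assms(2) and b0 = assms(3) and ab = assms(4) and an = assms(5)
  have chi: "1 / sqrt 2 \<le> chi" by (rule chi_lower[OF chiP])
  have npos: "0 < n" using an ab b0 by (cases n, auto)
  define p where "p = sbm n k S a b"
  define E0 where "E0 = {A0. \<exists>T \<subseteq> {..<n}. real (card T) \<ge> (1 - exp (-2 * (sqrt a - sqrt b)\<^sup>2)) * real n \<and>
                   opnorm_on T (\<lambda>i j. A0 i j - (a + b) / (2 * real n)
                                    - (a - b) / (2 * real n) * (if same_comm k S i j then 1 else -1))
                        \<le> chi * sqrt (a + b)}"
  define Ev where "Ev = {A0. \<forall>A. admissible n k S eps A0 A \<longrightarrow>
              (\<forall>W F. sdp_optimal n A a b chi W F \<longrightarrow>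
                 (let C = (sqrt a - sqrt b)\<^sup>2 in
                  (\<Sum>(i, j) \<in> {(i, j). i < n \<and> j < n \<and> \<not> same_comm k S i j}. W i j)
                     \<le> (5 * chi / sqrt C + 2 * eps) * (real n)\<^sup>2 \<and>
                  (\<Sum>(i, j) \<in> {(i, j). i < n \<and> j < n \<and> same_comm k S i j}. W i j)
                     \<ge> (\<Sum>l<k. (real (card (S l)))\<^sup>2) - (6 * chi / sqrt C + 4 * eps) * (real n)\<^sup>2))}"
  have P0: "measure_pmf.prob p E0 \<ge> 1 - 2 / (real n)\<^sup>2"
    using chiP part b0 ab an unfolding chi_property_def Let_def E0_def p_def
    by (elim allE[of _ n] allE[of _ k] allE[of _ S] allE[of _ a] allE[of _ b], simp)
  have sub: "E0 \<inter> set_pmf p \<subseteq> Ev"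
  proof
    fix A0 assume "A0 \<in> E0 \<inter> set_pmf p"
    hence A0E: "A0 \<in> E0" and A0p: "A0 \<in> set_pmf p" by auto
    obtain T where T: "T \<subseteq> {..<n}"
      and cT: "real (card T) \<ge> (1 - exp (-2 * (sqrt a - sqrt b)\<^sup>2)) * real n"
      and opT: "opnorm_on T (\<lambda>i j. A0 i j - (a + b) / (2 * real n)
                                    - (a - b) / (2 * real n) * (if same_comm k S i j then 1 else -1))
                        \<le> chi * sqrt (a + b)"
      using A0E unfolding E0_def by blast
    show "A0 \<in> Ev" unfolding Ev_def
    proof (intro CollectI allI impI)
      fix A W F
      assume adm: "admissible n k S eps A0 A" and opt: "sdp_optimal n A a b chi W F"
      obtain A1 B where adjA1: "adjacency n A1"
        and mono: "\<forall>i<n. \<forall>j<n. (same_comm k S i j \<longrightarrow> A1 i j \<ge> A0 i j) \<and>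
                      (\<not> same_comm k S i j \<longrightarrow> A1 i j \<le> A0 i j)"
        and Bn: "B \<subseteq> {..<n}" and cB: "real (card B) \<le> eps * real n"
        and AA1: "\<forall>i<n. \<forall>j<n. i \<notin> B \<and> j \<notin> B \<longrightarrow> A i j = A1 i j"
        using adm unfolding admissible_def by blast
      interpret D: detx n k S a b eps chi A0 A A1 B T
      proof (unfold_locales)
        show "is_partition n k S" by (rule part)
        show "0 \<le> b" by (rule b0)
        show "b < a" by (rule ab)
        show "1 / sqrt 2 \<le> chi" by (rule chi)
        show "\<And>i j. A0 i j = 0 \<or> A0 i j = 1" using sbm_support(1)[OF A0p[unfolded p_def]] .
        show "\<And>i j. A0 i j = A0 j i" using sbm_support(2)[OF A0p[unfolded p_def]] .
        show "\<And>i. A0 i i = 0" using sbm_support(3)[OF A0p[unfolded p_def]] .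
        show "adjacency n A1" by (rule adjA1)
        show "\<And>i j. i < n \<Longrightarrow> j < n \<Longrightarrow> same_comm k S i j \<Longrightarrow> A0 i j \<le> A1 i j" using mono by blast
        show "\<And>i j. i < n \<Longrightarrow> j < n \<Longrightarrow> \<not> same_comm k S i j \<Longrightarrow> A1 i j \<le> A0 i j" using mono by blast
        show "B \<subseteq> {..<n}" by (rule Bn)
        show "real (card B) \<le> eps * real n" by (rule cB)
        show "\<And>i j. i < n \<Longrightarrow> j < n \<Longrightarrow> i \<notin> B \<Longrightarrow> j \<notin> B \<Longrightarrow> A i j = A1 i j" using AA1 by blast
        show "T \<subseteq> {..<n}" by (rule T)
        show "(1 - exp (-2 * (sqrt a - sqrt b)\<^sup>2)) * real n \<le> real (card T)" by (rule cT)
        show "opnorm_on T (\<lambda>i j. A0 i j - (a + b) / (2 * real n)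
                 - (a - b) / (2 * real n) * (if same_comm k S i j then 1 else -1)) \<le> chi * sqrt (a + b)"
          by (rule opT)
      qed
      show "let C = (sqrt a - sqrt b)\<^sup>2 in
                  (\<Sum>(i, j) \<in> {(i, j). i < n \<and> j < n \<and> \<not> same_comm k S i j}. W i j)
                     \<le> (5 * chi / sqrt C + 2 * eps) * (real n)\<^sup>2 \<and>
                  (\<Sum>(i, j) \<in> {(i, j). i < n \<and> j < n \<and> same_comm k S i j}. W i j)
                     \<ge> (\<Sum>l<k. (real (card (S l)))\<^sup>2) - (6 * chi / sqrt C + 4 * eps) * (real n)\<^sup>2"
        unfolding Let_def by (rule D.det_main[OF opt npos])
    qed
  qed
  have "measure_pmf.prob p E0 = measure_pmf.prob p (E0 \<inter> set_pmf p)" by (simp add: measure_Int_set_pmf)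
  also have "\<dots> \<le> measure_pmf.prob p Ev" by (rule measure_pmf.finite_measure_mono[OF sub], simp)
  finally have "measure_pmf.prob p Ev \<ge> 1 - 2 / (real n)\<^sup>2" using P0 by linarith
  thus ?thesis unfolding Ev_def p_def .
qed


end
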